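(* Let $n,m,N$ be positive integers, $p_1,\ldots,p_N,q_1,\ldots,q_N,g_1,\ldots,g_m\in\mathbb{R}[\mathbf{x}]$ with $\mathbf{x}=(x_1,\ldots,x_n)$, $\mathbf{K}=\{\mathbf{x}\in\mathbb{R}^n\mid g_j(\mathbf{x})\ge0,\ j\in[m]\}$ compact with $q_i>0$ on $\mathbf{K}$ for all $i\in[N]$, and $\rho=\inf_{\mathbf{x}\in\mathbf{K}}\sum_{i=1}^Np_i(\mathbf{x})/q_i(\mathbf{x})$. Suppose there are $I_1,\ldots,I_N\subseteq[n]$ and $J_1,\ldots,J_N\subseteq[m]$ with $[n]=\bigcup_iI_i$ and $[m]=\bigcup_iJ_i$ such that: (i) $p_i,q_i\in\mathbb{R}[\mathbf{x}(I_i)]$ for every $i$; (ii) $g_j\in\mathbb{R}[\mathbf{x}(I_i)]$ for every $j\in J_i$; (iii) for every $i$ there is $k\in J_i$ with $g_k=M_i-\sum_{\ell\in I_i}x_\ell^2$ for some $M_i>0$; (iv) for every $i\in\{2,\ldots,N\}$, $I_i\cap\bigcup_{j=1}^{i-1}I_j\subseteq I_k$ for some $k\in[i-1]$. Assume also $q_i>0$ on $\mathbf{K}_i$ for all $i\in[N]$. Then $\rho^{\mathrm{cs}}=\rho$, where \[ \rho^{\mathrm{cs}}=\inf\Big\{\sum_{i=1}^N\int_{\mathbf{K}_i}p_i\,\mathrm{d}\mu_i\ \Big|\ \mu_i\in\mathcal{M}(\mathbf{K}_i)_+^{\mathcal{R}},\ \int_{\mathbf{K}_i}q_i\,\mathrm{d}\mu_i=1\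 (i\in[N]),\ \pi_{ij}(q_i\,\mathrm{d}\mu_i)=\pi_{ji}(q_j\,\mathrm{d}\mu_j)\ (j\in U_i,\ i\in[N-1])\Big\}. \]
   Context: $\mathbf{x}(I)=\{x_\ell\mid\ell\in I\}$. $\mathbf{K}_i=\{\mathbf{z}\in\mathbb{R}^{I_i}\mid g_j(\mathbf{z})\ge0,\ j\in J_i\}$. $U_i=\{j\in\{i+1,\ldots,N\}\mid I_i\cap I_j\ne\emptyset\}$ ($i<N$). For a measure $\mu_i$ on $\mathbf{K}_i$, $q_i\,\mathrm{d}\mu_i$ is the measure with density $q_i$ with respect to $\mu_i$, and $\pi_{ij}(q_i\,\mathrm{d}\mu_i)$ is its image (marginal) under the coordinate projection $\mathbb{R}^{I_i}\to\mathbb{R}^{I_i\cap I_j}$. Let $\mathcal{A}=\bigcup_{i=1}^N(\operatorname{supp}p_i\cup\operatorname{supp}q_i)\cup\bigcup_{j=1}^m\operatorname{supp}g_j$ (supports = exponents of monomials with nonzero coefficients), and $\mathcal{R}=\{\mathbf{r}\in\{0,1\}^n\mid\mathbf{r}^\intercal\boldsymbol{\alpha}\equiv0\ (\mathrm{mod}\,2)\ \forall\boldsymbol{\alpha}\in\mathcal{A}\}$. For $\mathbf{r}\in\mathcal{R}$, $\mathbf{r}$ acts on $\mathbb{R}^{I_i}$ by $z_\ell\mapsto(-1)^{r_\ell}z_\ell$; for a measure $\mu$ on $\mathbf{K}_i$, $\mu^{\mathbf{r}}(S)=\mu(\mathbf{r}(S))$. $\mathcal{M}(\mathbf{K}_i)^{\mathcal{R}}_+$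 is the set of finite positive Borel measures on $\mathbf{K}_i$ with $\mu^{\mathbf{r}}=\mu$ for all $\mathbf{r}\in\mathcal{R}$. *)

theory Defs
  imports "HOL-Probability.Probability" "HOL-Library.Poly_Mapping"
begin

text \<open>Real multivariate polynomials in variables x_1, x_2, ... (indexed by nat):
  finitely supported maps from exponent vectors to real coefficients.\<close>
type_synonym mpoly = "(nat \<Rightarrow>\<^sub>0 nat) \<Rightarrow>\<^sub>0 real"

definition mpoly_eval :: "mpoly \<Rightarrow> (nat \<Rightarrow> real) \<Rightarrow> real" where
  "mpoly_eval p x = (\<Sum>\<alpha>\<in>Poly_Mapping.keys p. Poly_Mapping.lookup p \<alpha> * (\<Prod>l\<in>Poly_Mapping.keys \<alpha>. x l ^ Poly_Mapping.lookup \<alpha> l))"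

definition mpoly_vars :: "mpoly \<Rightarrow> nat set" where
  "mpoly_vars p = (\<Union>\<alpha>\<in>Poly_Mapping.keys p. Poly_Mapping.keys \<alpha>)"

definition ball_poly :: "real \<Rightarrow> nat set \<Rightarrow> mpoly" where
  "ball_poly M I = Poly_Mapping.single 0 M - (\<Sum>l\<in>I. Poly_Mapping.single (Poly_Mapping.single l 2) 1)"

text \<open>Points of R^I are extensional functions on I.\<close>
definition semialg :: "nat set \<Rightarrow> (nat \<Rightarrow> mpoly) \<Rightarrow> nat set \<Rightarrow> (nat \<Rightarrow> real) set" where
  "semialg I g J = {z \<in> PiE I (\<lambda>_. UNIV). \<forall>j\<in>J. mpoly_eval (g j) z \<ge> 0}"

text \<open>An element r of {0,1}^n is encoded by the set S = {l. r_l = 1} \<subseteq> {1..n}.\<close>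
definition sign_syms :: "nat \<Rightarrow> (nat \<Rightarrow>\<^sub>0 nat) set \<Rightarrow> nat set set" where
  "sign_syms n A = {S. S \<subseteq> {1..n} \<and> (\<forall>\<alpha>\<in>A. even (\<Sum>l\<in>S. Poly_Mapping.lookup \<alpha> l))}"

definition sflip :: "nat set \<Rightarrow> nat set \<Rightarrow> (nat \<Rightarrow> real) \<Rightarrow> (nat \<Rightarrow> real)" where
  "sflip S I z = restrict (\<lambda>l. if l \<in> S then - z l else z l) I"

definition sym_invariant :: "nat set set \<Rightarrow> nat set \<Rightarrow> (nat \<Rightarrow> real) measure \<Rightarrow> bool" where
  "sym_invariant R I \<mu> \<longleftrightarrow> (\<forall>S\<in>R. \<forall>A\<in>sets \<mu>. emeasure \<mu> (sflip S I ` A) = emeasure \<mu> A)"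

definition marginal :: "nat set \<Rightarrow> mpoly \<Rightarrow> (nat \<Rightarrow> real) measure \<Rightarrow> (nat \<Rightarrow> real) measure" where
  "marginal I' q \<mu> = distr (density \<mu> (\<lambda>z. ennreal (mpoly_eval q z))) (PiM I' (\<lambda>_. lborel)) (\<lambda>z. restrict z I')"

definition Uset :: "nat \<Rightarrow> (nat \<Rightarrow> nat set) \<Rightarrow> nat \<Rightarrow> nat set" where
  "Uset N I i = {j \<in> {i+1..N}. I i \<inter> I j \<noteq> {}}"

definition supp_set :: "nat \<Rightarrow> nat \<Rightarrow> (nat \<Rightarrow> mpoly) \<Rightarrow> (nat \<Rightarrow> mpoly) \<Rightarrow> (nat \<Rightarrow> mpoly) \<Rightarrow> (nat \<Rightarrow>\<^sub>0 nat) set" where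
  "supp_set N m p q g = (\<Union>i\<in>{1..N}. Poly_Mapping.keys (p i) \<union> Poly_Mapping.keys (q i)) \<union> (\<Union>j\<in>{1..m}. Poly_Mapping.keys (g j))"

text \<open>Feasibility of (\<mu>_1,...,\<mu>_N): \<mu>_i finite positive Borel measure on K_i (a measure on
  R^{I_i} vanishing outside K_i), R-invariant, with \<integral> q_i d\<mu>_i = 1 and matching marginals.\<close>
definition feasible_cs ::
  "nat \<Rightarrow> nat \<Rightarrow> nat \<Rightarrow> (nat \<Rightarrow> nat set) \<Rightarrow> (nat \<Rightarrow> nat set) \<Rightarrow> (nat \<Rightarrow> mpoly) \<Rightarrow> (nat \<Rightarrow> mpoly) \<Rightarrow> (nat \<Rightarrow> mpoly)
    \<Rightarrow> (nat \<Rightarrow> (nat \<Rightarrow> real) measure) \<Rightarrow> bool" where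
  "feasible_cs n m N I J g p q \<mu> \<longleftrightarrow>
     (\<forall>i\<in>{1..N}.
        sets (\<mu> i) = sets (PiM (I i) (\<lambda>_. lborel)) \<and>
        finite_measure (\<mu> i) \<and>
        emeasure (\<mu> i) (space (\<mu> i) - semialg (I i) g (J i)) = 0 \<and>
        sym_invariant (sign_syms n (supp_set N m p q g)) (I i) (\<mu> i) \<and>
        (LINT z : semialg (I i) g (J i) | \<mu> i. mpoly_eval (q i) z) = 1) \<and>
     (\<forall>i\<in>{1..N-1}. \<forall>j\<in>Uset N I i.
        marginal (I i \<inter> I j) (q i) (\<mu> i) = marginal (I i \<inter> I j) (q j) (\<mu> j))"

definition rho_cs ::
  "nat \<Rightarrow> nat \<Rightarrow> nat \<Rightarrow> (nat \<Rightarrow> nat set) \<Rightarrow> (nat \<Rightarrow> nat set) \<Rightarrow> (nat \<Rightarrow> mpoly) \<Rightarrow> (nat \<Rightarrow> mpoly) \<Rightarrow> (nat \<Rightarrow> mpoly) \<Rightarrow> ereal" where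
  "rho_cs n m N I J g p q =
     (INF \<mu> \<in> {\<mu>. feasible_cs n m N I J g p q \<mu>}.
        ereal (\<Sum>i=1..N. LINT z : semialg (I i) g (J i) | \<mu> i. mpoly_eval (p i) z))"

end

theory Submission
  imports Defs
begin

definition mono_eval :: "(nat \<Rightarrow>\<^sub>0 nat) \<Rightarrow> (nat \<Rightarrow> real) \<Rightarrow> real" where
  "mono_eval \<alpha> x = (\<Prod>l\<in>Poly_Mapping.keys \<alpha>. x l ^ Poly_Mapping.lookup \<alpha> l)"

lemma mpoly_eval_alt: "mpoly_eval p x = (\<Sum>\<alpha>\<in>Poly_Mapping.keys p. Poly_Mapping.lookup p \<alpha> * mono_eval \<alpha> x)"
  by (simp add: mpoly_eval_def mono_eval_def)

lemma mpoly_eval_superset: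
  assumes "finite A" "Poly_Mapping.keys p \<subseteq> A"
  shows "mpoly_eval p x = (\<Sum>\<alpha>\<in>A. Poly_Mapping.lookup p \<alpha> * mono_eval \<alpha> x)"
  unfolding mpoly_eval_alt
  by (rule sum.mono_neutral_left) (use assms in \<open>auto simp: in_keys_iff\<close>)

lemma mpoly_eval_add: "mpoly_eval (p + q) x = mpoly_eval p x + mpoly_eval q x"
proof -
  let ?A = "Poly_Mapping.keys p \<union> Poly_Mapping.keys q"
  have f: "finite ?A" by simp
  have "mpoly_eval (p + q) x = (\<Sum>\<alpha>\<in>?A. Poly_Mapping.lookup (p+q) \<alpha> * mono_eval \<alpha> x)"
    by (rule mpoly_eval_superset[OF f]) (simp add: keys_add)
  also have "\<dots> = (\<Sum>\<alpha>\<in>?A. Poly_Mapping.lookup p \<alpha> * mono_eval \<alpha> x) + (\<Sum>\<alpha>\<in>?A. Poly_Mapping.lookup q \<alpha> * mono_eval \<alpha> x)"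
    by (simp add: lookup_add distrib_right sum.distrib)
  also have "\<dots> = mpoly_eval p x + mpoly_eval q x"
    by (simp add: mpoly_eval_superset[OF f, symmetric])
  finally show ?thesis .
qed

lemma mpoly_eval_uminus: "mpoly_eval (- p) x = - mpoly_eval p x"
proof -
  have k: "Poly_Mapping.keys (- p) = Poly_Mapping.keys p"
    by (metis (no_types, opaque_lifting) in_keys_iff lookup_uminus neg_equal_0_iff_equal subsetI subset_antisym)
  show ?thesis by (simp add: mpoly_eval_alt k sum_negf)
qed

lemma mpoly_eval_diff: "mpoly_eval (p - q) x = mpoly_eval p x - mpoly_eval q x"
  using mpoly_eval_add[of p "-q" x] by (simp add: mpoly_eval_uminus)

lemma mpoly_eval_zero: "mpoly_eval 0 x = 0"
  by (simp add: mpoly_eval_alt)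

lemma mpoly_eval_sum: "mpoly_eval (\<Sum>i\<in>A. f i) x = (\<Sum>i\<in>A. mpoly_eval (f i) x)"
  by (induction A rule: infinite_finite_induct) (auto simp: mpoly_eval_zero mpoly_eval_add)

lemma mpoly_eval_single: "mpoly_eval (Poly_Mapping.single \<alpha> c) x = c * mono_eval \<alpha> x"
  by (cases "c = 0") (auto simp: mpoly_eval_alt)

lemma mono_eval_zero: "mono_eval 0 x = 1"
  by (simp add: mono_eval_def)

lemma mono_eval_sq: "mono_eval (Poly_Mapping.single l 2) x = x l ^ 2"
  by (simp add: mono_eval_def)

lemma mpoly_eval_ball: "finite I \<Longrightarrow> mpoly_eval (ball_poly M I) x = M - (\<Sum>l\<in>I. x l ^ 2)"
  by (simp add: ball_poly_def mpoly_eval_diff mpoly_eval_sum mpoly_eval_single mono_eval_zero mono_eval_sq)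

lemma mpoly_eval_cong:
  assumes "\<And>l. l \<in> mpoly_vars p \<Longrightarrow> x l = y l"
  shows "mpoly_eval p x = mpoly_eval p y"
  unfolding mpoly_eval_def
  by (intro sum.cong refl arg_cong2[where f="(*)"] prod.cong) (use assms in \<open>(auto simp: mpoly_vars_def, metis)\<close>)

lemma mpoly_eval_restrict:
  "mpoly_vars p \<subseteq> I \<Longrightarrow> mpoly_eval p (restrict x I) = mpoly_eval p x"
  by (rule mpoly_eval_cong) auto

lemma mpoly_eval_continuous: "continuous_on UNIV (mpoly_eval p)"
  unfolding mpoly_eval_def
  by (intro continuous_intros continuous_on_product_coordinates)

lemma mono_eval_flip:
  assumes "finite S" "even (\<Sum>l\<in>S. Poly_Mapping.lookup \<alpha> l)"
    and "\<And>l. l \<in> Poly_Mapping.keys \<alpha> \<Longrightarrow> w l = (if l \<in> S then - z l else z l)"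
  shows "mono_eval \<alpha> w = mono_eval \<alpha> z"
proof -
  let ?K = "Poly_Mapping.keys \<alpha>"
  have "mono_eval \<alpha> w = (\<Prod>l\<in>?K. (if l \<in> S then (-1) ^ Poly_Mapping.lookup \<alpha> l else 1) * z l ^ Poly_Mapping.lookup \<alpha> l)"
    unfolding mono_eval_def
    by (intro prod.cong refl) (auto simp: assms(3) power_mult_distrib[symmetric])
  also have "\<dots> = (\<Prod>l\<in>?K. (if l \<in> S then (-1::real) ^ Poly_Mapping.lookup \<alpha> l else 1)) * mono_eval \<alpha> z"
    by (simp add: mono_eval_def prod.distrib)
  also have "(\<Prod>l\<in>?K. (if l \<in> S then (-1::real) ^ Poly_Mapping.lookup \<alpha> l else 1)) = (\<Prod>l\<in>?K \<inter> S. (-1::real) ^ Poly_Mapping.lookup \<alpha> l)"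
    by (simp add: prod.If_cases Int_commute)
  also have "\<dots> = (-1) ^ (\<Sum>l\<in>?K \<inter> S. Poly_Mapping.lookup \<alpha> l)"
    by (simp add: power_sum)
  also have "(\<Sum>l\<in>?K \<inter> S. Poly_Mapping.lookup \<alpha> l) = (\<Sum>l\<in>S. Poly_Mapping.lookup \<alpha> l)"
    by (rule sum.mono_neutral_left) (use assms(1) in \<open>auto simp: in_keys_iff\<close>)
  finally show ?thesis using assms(2) by simp
qed

lemma mpoly_eval_flip:
  assumes "finite S" "\<And>\<alpha>. \<alpha> \<in> Poly_Mapping.keys p \<Longrightarrow> even (\<Sum>l\<in>S. Poly_Mapping.lookup \<alpha> l)"
    and "\<And>l. l \<in> mpoly_vars p \<Longrightarrow> w l = (if l \<in> S then - z l else z l)"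
  shows "mpoly_eval p w = mpoly_eval p z"
  unfolding mpoly_eval_alt
proof (rule sum.cong[OF refl])
  fix \<alpha> assume a: "\<alpha> \<in> Poly_Mapping.keys p"
  have "mono_eval \<alpha> w = mono_eval \<alpha> z"
  proof (rule mono_eval_flip[OF assms(1) assms(2)[OF a]])
    fix l assume l: "l \<in> Poly_Mapping.keys \<alpha>"
    have "l \<in> mpoly_vars p" using a l by (auto simp: mpoly_vars_def)
    then show "w l = (if l \<in> S then - z l else z l)" by (rule assms(3))
  qed
  then show "Poly_Mapping.lookup p \<alpha> * mono_eval \<alpha> w = Poly_Mapping.lookup p \<alpha> * mono_eval \<alpha> z" by simp
qed


lemma cont_meas:
  fixes f :: "(nat \<Rightarrow> real) \<Rightarrow> real"
  assumes "continuous_on UNIV f"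
  shows "f \<in> borel_measurable (PiM I (\<lambda>_. lborel))"
proof -
  define E where "E = (\<lambda>y::nat\<Rightarrow>real. \<lambda>l. if l \<in> I then y l else undefined)"
  have "E \<in> measurable (PiM I (\<lambda>_. lborel)) (PiM UNIV (\<lambda>_. borel))"
    unfolding E_def
  proof (rule measurable_PiM_single')
    fix l :: nat
    show "(\<lambda>y. if l \<in> I then y l else undefined) \<in> borel_measurable (PiM I (\<lambda>_. lborel))"
    proof (cases "l \<in> I")
      case True
      have "(\<lambda>y. y l) \<in> measurable (PiM I (\<lambda>_. lborel)) lborel"
        using True by (rule measurable_component_singleton)
      then show ?thesis using True measurable_lborel1 by simp
    qed simp
  qed simp
  then have "E \<in> borel_measurable (PiM I (\<lambda>_. lborel))"
  proof -
    have eq: "measurable (PiM I (\<lambda>_. lborel)) (PiM UNIV (\<lambda>_::nat. borel::real measure)) = borel_measurable (PiM I (\<lambda>_. lborel))"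
      by (rule measurable_cong_sets[OF refl sets_PiM_equal_borel])
    show ?thesis using \<open>E \<in> _\<close> unfolding eq .
  qed
  then have m: "(\<lambda>y. f (E y)) \<in> borel_measurable (PiM I (\<lambda>_. lborel))"
    using borel_measurable_continuous_onI[OF assms] by (rule measurable_compose)
  have e: "f (E y) = f y" if "y \<in> space (PiM I (\<lambda>_. lborel))" for y
  proof -
    have "E y = y" using that unfolding E_def space_PiM PiE_def extensional_def by auto
    then show ?thesis by simp
  qed
  show ?thesis
    by (rule measurable_cong[THEN iffD1, OF _ m]) (rule e)
qed

lemma continuous_restrict: "continuous_on UNIV (\<lambda>x::nat\<Rightarrow>real. restrict x I)"
proof (intro continuous_on_coordinatewise_then_product)
  fix i show "continuous_on UNIV (\<lambda>x::nat\<Rightarrow>real. restrict x I i)"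
    by (cases "i \<in> I") (simp_all add: restrict_def)
qed

lemma closed_PiE_UNIV: "closed (PiE I (\<lambda>_. UNIV) :: (nat \<Rightarrow> real) set)"
proof -
  have "PiE I (\<lambda>_. UNIV) = {x::nat\<Rightarrow>real. restrict x I = x}"
    by (auto simp: PiE_iff extensional_def restrict_def fun_eq_iff)
  moreover have "closed {x::nat\<Rightarrow>real. restrict x I = x}"
    by (rule closed_Collect_eq) (auto intro: continuous_restrict continuous_on_id)
  ultimately show ?thesis by simp
qed

lemma compact_box: "compact (PiE I (\<lambda>_. cball 0 r) :: (nat \<Rightarrow> real) set)"
proof -
  define S where "S = (\<lambda>l::nat. if l \<in> I then cball (0::real) r else {undefined})"
  have eq: "PiE I (\<lambda>_. cball 0 r) = PiE UNIV S"
    by (auto simp: S_def PiE_iff extensional_def split: if_splits)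
  have "compactin (product_topology (\<lambda>_. euclidean) UNIV) (PiE UNIV S)"
    by (subst compactin_PiE) (auto simp: S_def)
  then show ?thesis unfolding eq euclidean_product_topology by simp
qed

lemma compact_glob:
  fixes K :: "nat \<Rightarrow> (nat \<Rightarrow> real) set"
  assumes "finite A" "\<And>i. i \<in> A \<Longrightarrow> compact (K i)" "\<And>i. i \<in> A \<Longrightarrow> finite (I i)"
  shows "compact {x \<in> PiE (\<Union>i\<in>A. I i) (\<lambda>_. UNIV). \<forall>i\<in>A. restrict x (I i) \<in> K i}"
proof -
  let ?U = "\<Union>i\<in>A. I i"
  let ?C = "\<Union>i\<in>A. \<Union>l\<in>I i. (\<lambda>z. z l) ` K i"
  have "compact ?C"
  proof (intro compact_UN)
    fix i l assume "i \<in> A" "l \<in> I i"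
    show "compact ((\<lambda>z. z l) ` K i)"
      by (rule compact_continuous_image[OF continuous_on_subset[OF continuous_on_product_coordinates] assms(2)[OF \<open>i \<in> A\<close>]]) simp
  qed (use assms in auto)
  then obtain r where r0: "\<forall>v\<in>?C. norm v \<le> r"
    using compact_imp_bounded[OF \<open>compact ?C\<close>] unfolding bounded_iff by blast
  then have r: "?C \<subseteq> cball 0 r" by (auto simp: mem_cball_0)
  have cl: "closed {x::nat\<Rightarrow>real. \<forall>i\<in>A. restrict x (I i) \<in> K i}"
  proof -
    have "{x::nat\<Rightarrow>real. \<forall>i\<in>A. restrict x (I i) \<in> K i} = (\<Inter>i\<in>A. (\<lambda>x. restrict x (I i)) -` K i)"
      by auto
    moreover have "closed (\<Inter>i\<in>A. (\<lambda>x::nat\<Rightarrow>real. restrict x (I i)) -` K i)"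
      using assms by (intro closed_INT ballI closed_vimage compact_imp_closed continuous_restrict) simp
    ultimately show ?thesis by simp
  qed
  have "{x \<in> PiE ?U (\<lambda>_. UNIV). \<forall>i\<in>A. restrict x (I i) \<in> K i} = PiE ?U (\<lambda>_. cball 0 r) \<inter> {x. \<forall>i\<in>A. restrict x (I i) \<in> K i}"
  proof (intro equalityI subsetI)
    fix x assume x: "x \<in> {x \<in> PiE ?U (\<lambda>_. UNIV). \<forall>i\<in>A. restrict x (I i) \<in> K i}"
    have "x l \<in> cball 0 r" if "l \<in> ?U" for l
    proof -
      from that obtain i where i: "i \<in> A" "l \<in> I i" by blast
      then have "restrict x (I i) l \<in> ?C" using x by blast
      then have "x l \<in> ?C" using i by simp
      then show ?thesis using r by blast
    qed
    moreover have "x \<in> extensional ?U" using x by (simp add: PiE_def)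
    ultimately show "x \<in> PiE ?U (\<lambda>_. cball 0 r) \<inter> {x. \<forall>i\<in>A. restrict x (I i) \<in> K i}"
      using x by (simp add: PiE_def Pi_def)
  next
    fix x assume "x \<in> PiE ?U (\<lambda>_. cball 0 r) \<inter> {x. \<forall>i\<in>A. restrict x (I i) \<in> K i}"
    moreover have "PiE ?U (\<lambda>_. cball 0 r) \<subseteq> PiE ?U (\<lambda>_. UNIV)" by (rule PiE_mono) simp
    ultimately show "x \<in> {x \<in> PiE ?U (\<lambda>_. UNIV). \<forall>i\<in>A. restrict x (I i) \<in> K i}" by blast
  qed
  moreover have "compact (PiE ?U (\<lambda>_. cball 0 r) \<inter> {x. \<forall>i\<in>A. restrict x (I i) \<in> K i})"
    by (intro compact_Int_closed compact_box cl)
  ultimately show ?thesis by simp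
qed

lemma integrable_on_compact:
  fixes f :: "(nat \<Rightarrow> real) \<Rightarrow> real"
  assumes "finite_measure \<nu>" "compact K" "continuous_on K f" "f \<in> borel_measurable \<nu>"
    and "AE x in \<nu>. x \<in> K"
  shows "integrable \<nu> f"
proof -
  obtain B where B: "\<And>x. x \<in> K \<Longrightarrow> norm (f x) \<le> B"
    using compact_imp_bounded[OF compact_continuous_image[OF assms(3) assms(2)]]
    by (auto simp: bounded_iff)
  have "AE x in \<nu>. norm (f x) \<le> B" using assms(5) by eventually_elim (rule B)
  then show ?thesis using finite_measure.integrable_const_bound[OF assms(1)] assms(4) by blast
qed


definition Kglob :: "(nat \<Rightarrow> nat set) \<Rightarrow> (nat \<Rightarrow> (nat \<Rightarrow> real) set) \<Rightarrow> nat \<Rightarrow> (nat \<Rightarrow> real) set" where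
  "Kglob I K N = {x \<in> PiE (\<Union>i\<in>{1..N}. I i) (\<lambda>_. UNIV). \<forall>i\<in>{1..N}. restrict x (I i) \<in> K i}"

lemma glue:
  assumes x: "x \<in> Kglob I K N" and z: "z \<in> K (Suc N)" and zK: "K (Suc N) \<subseteq> PiE (I (Suc N)) (\<lambda>_. UNIV)"
    and agree: "\<forall>l \<in> I (Suc N) \<inter> (\<Union>i\<in>{1..N}. I i). x l = z l"
  defines "w \<equiv> (\<lambda>l. if l \<in> (\<Union>i\<in>{1..N}. I i) then x l else z l)"
  shows "w \<in> Kglob I K (Suc N)" "\<forall>i\<in>{1..N}. restrict w (I i) = restrict x (I i)"
    "restrict w (I (Suc N)) = z"
proof -
  let ?U = "\<Union>i\<in>{1..N}. I i"
  have zE: "z \<in> PiE (I (Suc N)) (\<lambda>_. UNIV)" using z zK by blast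
  have xE: "x \<in> PiE ?U (\<lambda>_. UNIV)" using x by (simp add: Kglob_def)
  have r1: "restrict w (I i) = restrict x (I i)" if i: "i \<in> {1..N}" for i
  proof
    fix l show "restrict w (I i) l = restrict x (I i) l"
    proof (cases "l \<in> I i")
      case True then have "l \<in> ?U" using i by blast
      then show ?thesis using True by (simp add: w_def)
    qed simp
  qed
  then show "\<forall>i\<in>{1..N}. restrict w (I i) = restrict x (I i)" by blast
  show r2: "restrict w (I (Suc N)) = z"
  proof
    fix l show "restrict w (I (Suc N)) l = z l"
    proof (cases "l \<in> I (Suc N)")
      case True then show ?thesis using agree by (simp add: w_def)
    next
      case False then show ?thesis using zE by (simp add: PiE_def extensional_def)
    qed
  qed
  have U: "(\<Union>i\<in>{1..Suc N}. I i) = ?U \<union> I (Suc N)"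
    by (simp add: atLeastAtMostSuc_conv Un_commute)
  have "w \<in> PiE (?U \<union> I (Suc N)) (\<lambda>_. UNIV)"
  proof -
    have "w l = undefined" if "l \<notin> ?U \<union> I (Suc N)" for l
    proof -
      have "z l = undefined" using zE that by (simp add: PiE_def extensional_def)
      then show ?thesis using that by (simp add: w_def)
    qed
    then show ?thesis by (simp add: PiE_def extensional_def)
  qed
  moreover have "\<forall>i\<in>{1..Suc N}. restrict w (I i) \<in> K i"
  proof
    fix i assume i: "i \<in> {1..Suc N}"
    show "restrict w (I i) \<in> K i"
    proof (cases "i = Suc N")
      case True then show ?thesis using r2 z by simp
    next
      case False then have "i \<in> {1..N}" using i by auto
      then show ?thesis using r1 x by (simp add: Kglob_def)
    qed
  qed
  ultimately show "w \<in> Kglob I K (Suc N)" unfolding Kglob_def U by blast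
qed

lemma meas_transfer:
  assumes "sets M = sets M'" "f \<in> borel_measurable M'"
  shows "f \<in> borel_measurable M"
  by (subst measurable_cong_sets[OF assms(1) refl]) (rule assms(2))

lemma sum_if_k:
  fixes a :: "nat \<Rightarrow> real"
  assumes "finite A" "k \<in> A"
  shows "(\<Sum>i\<in>A. (if i = k then a i + b else a i)) = (\<Sum>i\<in>A. a i) + b"
proof -
  have "(\<Sum>i\<in>A. (if i = k then a i + b else a i)) = (\<Sum>i\<in>A. a i + (if i = k then b else 0))"
    by (intro sum.cong) auto
  also have "\<dots> = (\<Sum>i\<in>A. a i) + b" using assms by (simp add: sum.distrib)
  finally show ?thesis .
qed

definition Dd :: "nat set \<Rightarrow> (nat \<Rightarrow> real) \<Rightarrow> (nat \<Rightarrow> real) \<Rightarrow> real" where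
  "Dd S y z = (\<Sum>l\<in>S. \<bar>y l - z l\<bar>)"

lemma Dd_nonneg: "0 \<le> Dd S y z" by (simp add: Dd_def sum_nonneg)
lemma Dd_self: "Dd S y y = 0" by (simp add: Dd_def)
lemma Dd_sym: "Dd S y z = Dd S z y" unfolding Dd_def by (intro sum.cong refl) (rule abs_minus_commute)
lemma Dd_tri: "Dd S y z \<le> Dd S y y' + Dd S y' z"
  unfolding Dd_def sum.distrib[symmetric] by (intro sum_mono) simp
lemma Dd_cong: "(\<And>l. l \<in> S \<Longrightarrow> y l = y' l) \<Longrightarrow> Dd S y z = Dd S y' z"
  by (simp add: Dd_def)
lemma Dd_cont: "continuous_on UNIV (\<lambda>y. Dd S y z)"
  unfolding Dd_def by (intro continuous_intros continuous_on_product_coordinates)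
lemma Dd_cont2: "continuous_on UNIV (\<lambda>p. Dd S (fst p) (snd p))"
  unfolding Dd_def
  by (intro continuous_intros continuous_on_compose2[OF continuous_on_product_coordinates] continuous_on_fst continuous_on_snd continuous_on_id) auto

definition hL :: "((nat \<Rightarrow> real) \<Rightarrow> real) \<Rightarrow> (nat \<Rightarrow> real) set \<Rightarrow> nat set \<Rightarrow> real \<Rightarrow> (nat \<Rightarrow> real) \<Rightarrow> real" where
  "hL f K S L y = Inf ((\<lambda>z. f z + L * Dd S y z) ` K)"

locale hLsetup =
  fixes f :: "(nat \<Rightarrow> real) \<Rightarrow> real" and K :: "(nat \<Rightarrow> real) set" and S :: "nat set" and L :: real and B :: real
  assumes Kne: "K \<noteq> {}" and Lnn: "0 \<le> L" and B: "\<And>z. z \<in> K \<Longrightarrow> -B \<le> f z"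
begin

lemma bdd: "bdd_below ((\<lambda>z. f z + L * Dd S y z) ` K)"
proof (rule bdd_belowI2)
  fix z assume "z \<in> K"
  then show "-B \<le> f z + L * Dd S y z" using B[of z] Lnn Dd_nonneg[of S y z] by (smt (verit) mult_nonneg_nonneg)
qed

lemma h_le: "z \<in> K \<Longrightarrow> hL f K S L y \<le> f z + L * Dd S y z"
  unfolding hL_def by (rule cInf_lower[OF imageI bdd])

lemma h_le_f: "z \<in> K \<Longrightarrow> hL f K S L z \<le> f z"
  using h_le[of z z] by (simp add: Dd_self)

lemma h_lb: "-B \<le> hL f K S L y"
  unfolding hL_def
proof (rule cInf_greatest)
  show "(\<lambda>z. f z + L * Dd S y z) ` K \<noteq> {}" using Kne by simp
  fix v assume "v \<in> (\<lambda>z. f z + L * Dd S y z) ` K"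
  then obtain z where "z \<in> K" "v = f z + L * Dd S y z" by blast
  then show "-B \<le> v" using B[of z] Lnn Dd_nonneg[of S y z] by (smt (verit) mult_nonneg_nonneg)
qed

lemma h_lip: "hL f K S L y \<le> hL f K S L y' + L * Dd S y y'"
proof -
  have "hL f K S L y - L * Dd S y y' \<le> hL f K S L y'"
    unfolding hL_def[of f K S L y']
  proof (rule cInf_greatest)
    show "(\<lambda>z. f z + L * Dd S y' z) ` K \<noteq> {}" using Kne by simp
    fix v assume "v \<in> (\<lambda>z. f z + L * Dd S y' z) ` K"
    then obtain z where z: "z \<in> K" "v = f z + L * Dd S y' z" by blast
    have "hL f K S L y \<le> f z + L * Dd S y z" by (rule h_le[OF z(1)])
    also have "\<dots> \<le> f z + L * (Dd S y y' + Dd S y' z)"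
      using Dd_tri[of S y z y'] Lnn by (simp add: mult_left_mono)
    finally show "hL f K S L y - L * Dd S y y' \<le> v" using z(2) by (simp add: algebra_simps)
  qed
  then show ?thesis by simp
qed

lemma h_cong: "(\<And>l. l \<in> S \<Longrightarrow> y l = y' l) \<Longrightarrow> hL f K S L y = hL f K S L y'"
  unfolding hL_def by (intro arg_cong[where f=Inf] image_cong refl arg_cong2[where f="(+)"] arg_cong2[where f="(*)"] Dd_cong) auto

lemma h_cont: "continuous_on UNIV (hL f K S L)"
proof (rule continuous_at_imp_continuous_on, intro ballI)
  fix y :: "nat \<Rightarrow> real"
  have c: "continuous_on UNIV (\<lambda>y'. L * Dd S y' y)"
    by (intro continuous_intros Dd_cont)
  then have "((\<lambda>y'. L * Dd S y' y) \<longlongrightarrow> L * Dd S y y) (at y)"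
    by (simp add: continuous_on_def)
  then have t0: "((\<lambda>y'. L * Dd S y' y) \<longlongrightarrow> 0) (at y)" by (simp add: Dd_self)
  have "\<forall>\<^sub>F y' in at y. norm (hL f K S L y' - hL f K S L y) \<le> L * Dd S y' y"
  proof (rule always_eventually, rule allI)
    fix y'
    show "norm (hL f K S L y' - hL f K S L y) \<le> L * Dd S y' y"
      using h_lip[of y' y] h_lip[of y y'] Dd_sym[of S y y'] by simp
  qed
  then have "((\<lambda>y'. hL f K S L y' - hL f K S L y) \<longlongrightarrow> 0) (at y)"
    using t0 by (rule Lim_null_comparison)
  then show "isCont (hL f K S L) y" unfolding isCont_def by (rule LIM_zero_cancel)
qed

end


definition hypA :: "nat \<Rightarrow> (nat \<Rightarrow> nat set) \<Rightarrow> (nat \<Rightarrow> (nat\<Rightarrow>real) set) \<Rightarrow> (nat \<Rightarrow> (nat\<Rightarrow>real) measure) \<Rightarrow> bool" where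
 "hypA N I K \<nu> \<longleftrightarrow> (\<forall>i\<in>{1..N}. finite (I i) \<and> compact (K i) \<and> K i \<subseteq> PiE (I i) (\<lambda>_. UNIV) \<and> K i \<in> sets (\<nu> i) \<and>
      sets (\<nu> i) = sets (PiM (I i) (\<lambda>_. lborel)) \<and> emeasure (\<nu> i) (space (\<nu> i)) = 1 \<and> emeasure (\<nu> i) (space (\<nu> i) - K i) = 0) \<and>
   (\<forall>i\<in>{1..N-1}. \<forall>j\<in>Uset N I i. distr (\<nu> i) (PiM (I i \<inter> I j) (\<lambda>_. lborel)) (\<lambda>z. restrict z (I i \<inter> I j)) = distr (\<nu> j) (PiM (I i \<inter> I j) (\<lambda>_. lborel)) (\<lambda>z. restrict z (I i \<inter> I j))) \<and>
   (\<forall>i\<in>{2..N}. \<exists>k\<in>{1..i-1}. I i \<inter> (\<Union>j\<in>{1..i-1}. I j) \<subseteq> I k)"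

definition hypF :: "nat \<Rightarrow> (nat \<Rightarrow> nat set) \<Rightarrow> (nat \<Rightarrow> (nat\<Rightarrow>real) set) \<Rightarrow> (nat \<Rightarrow> (nat \<Rightarrow> real) \<Rightarrow> real) \<Rightarrow> bool" where
 "hypF N I K f \<longleftrightarrow> (\<forall>i\<in>{1..N}. f i \<in> borel_measurable (PiM (I i) (\<lambda>_. lborel)) \<and> continuous_on (K i) (f i))"

lemma hypA_Suc: "hypA (Suc N) I K \<nu> \<Longrightarrow> hypA N I K \<nu>"
proof -
  assume h: "hypA (Suc N) I K \<nu>"
  have U: "Uset N I i \<subseteq> Uset (Suc N) I i" for i by (auto simp: Uset_def)
  show ?thesis using h U unfolding hypA_def
    by (intro conjI; (elim conjE)?) (force, fastforce, force)
qed

lemma hypA_D: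
  assumes "hypA N I K \<nu>" "i \<in> {1..N}"
  shows "finite (I i)" "compact (K i)" "K i \<subseteq> PiE (I i) (\<lambda>_. UNIV)" "K i \<in> sets (\<nu> i)"
    "sets (\<nu> i) = sets (PiM (I i) (\<lambda>_. lborel))" "emeasure (\<nu> i) (space (\<nu> i)) = 1"
    "emeasure (\<nu> i) (space (\<nu> i) - K i) = 0"
  using assms unfolding hypA_def by blast+

lemma hypA_prob: "hypA N I K \<nu> \<Longrightarrow> i \<in> {1..N} \<Longrightarrow> prob_space (\<nu> i)"
  by (rule prob_spaceI) (rule hypA_D(6))

lemma hypA_AE: assumes "hypA N I K \<nu>" "i \<in> {1..N}" shows "AE x in \<nu> i. x \<in> K i"
proof (rule AE_I')
  show "space (\<nu> i) - K i \<in> null_sets (\<nu> i)"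
    using hypA_D(4,7)[OF assms] by (simp add: null_sets_def)
qed auto

lemma hypA_ne: assumes "hypA N I K \<nu>" "i \<in> {1..N}" shows "K i \<noteq> {}"
  using hypA_D(6,7)[OF assms] by auto

lemma hypA_int:
  fixes g :: "(nat \<Rightarrow> real) \<Rightarrow> real"
  assumes "hypA N I K \<nu>" "i \<in> {1..N}" "continuous_on (K i) g" "g \<in> borel_measurable (PiM (I i) (\<lambda>_. lborel))"
  shows "integrable (\<nu> i) g"
proof (rule integrable_on_compact)
  show "finite_measure (\<nu> i)" using hypA_prob[OF assms(1,2)] by (simp add: prob_space.finite_measure)
  show "g \<in> borel_measurable (\<nu> i)" by (rule meas_transfer[OF hypA_D(5)[OF assms(1,2)] assms(4)])
qed (use assms hypA_D(2)[OF assms(1,2)] hypA_AE[OF assms(1,2)] in auto)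


lemma claimA:
  assumes "hypA N I K \<nu>" "hypF N I K f" "0 < \<epsilon>"
  shows "\<exists>x\<in>Kglob I K N. (\<Sum>i=1..N. f i (restrict x (I i))) < (\<Sum>i=1..N. \<integral>z. f i z \<partial>\<nu> i) + \<epsilon>"
  using assms
proof (induction N arbitrary: f \<epsilon>)
  case 0
  have "(\<lambda>_. undefined) \<in> Kglob I K 0" by (simp add: Kglob_def)
  then show ?case using 0 by force
next
  case (Suc N)
  note hA = Suc.prems(1) and hF = Suc.prems(2) and eps = Suc.prems(3)
  have hA0: "hypA N I K \<nu>" by (rule hypA_Suc[OF hA])
  define N' where "N' = Suc N"
  have N'in: "N' \<in> {1..Suc N}" by (simp add: N'_def)
  let ?U = "\<Union>i\<in>{1..N}. I i"
  define S where "S = I N' \<inter> ?U"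
  define V where "V = (\<Sum>i=1..Suc N. \<integral>z. f i z \<partial>\<nu> i)"
  have hF0: "hypF N I K f" using hF by (auto simp: hypF_def)
  have fN: "f N' \<in> borel_measurable (PiM (I N') (\<lambda>_. lborel))" "continuous_on (K N') (f N')"
    using hF N'in by (auto simp: hypF_def)
  have KN: "compact (K N')" "K N' \<noteq> {}" "K N' \<subseteq> PiE (I N') (\<lambda>_. UNIV)" "finite (I N')"
    using hypA_D[OF hA N'in] hypA_ne[OF hA N'in] by auto
  have intN: "integrable (\<nu> N') (f N')" by (rule hypA_int[OF hA N'in fN(2) fN(1)])
  have probN: "prob_space (\<nu> N')" by (rule hypA_prob[OF hA N'in])
  have AEN: "AE x in \<nu> N'. x \<in> K N'" by (rule hypA_AE[OF hA N'in])
  have sumSuc: "\<And>a. (\<Sum>i=1..Suc N. a i) = (\<Sum>i=1..N. a i) + a N'"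
    by (simp add: N'_def)
  show ?case
  proof (cases "S = {}")
    case True
    obtain z where z: "z \<in> K N'" "\<And>y. y \<in> K N' \<Longrightarrow> f N' z \<le> f N' y"
      using continuous_attains_inf[OF KN(1) KN(2) fN(2)] by blast
    have "f N' z \<le> (\<integral>y. f N' y \<partial>\<nu> N')"
    proof -
      have ic: "integrable (\<nu> N') (\<lambda>_. f N' z)"
        using finite_measure.integrable_const[OF prob_space.finite_measure[OF probN]] by blast
      have "(\<integral>y. f N' z \<partial>\<nu> N') \<le> (\<integral>y. f N' y \<partial>\<nu> N')"
        by (rule integral_mono_AE[OF ic intN]) (use AEN z(2) in \<open>auto elim!: AE_mp\<close>)
      then show ?thesis using probN by (simp add: prob_space.prob_space)
    qed
    obtain x where x: "x \<in> Kglob I K N" "(\<Sum>i=1..N. f i (restrict x (I i))) < (\<Sum>i=1..N. \<integral>z. f i z \<partial>\<nu> i) + \<epsilon>"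
      using Suc.IH[OF hA0 hF0 eps] by blast
    define w where "w = (\<lambda>l. if l \<in> ?U then x l else z l)"
    have agree: "\<forall>l \<in> I (Suc N) \<inter> ?U. x l = z l" using True by (simp add: S_def N'_def)
    note g = glue[OF x(1) z(1)[unfolded N'_def] KN(3)[unfolded N'_def] agree, folded w_def]
    have "(\<Sum>i=1..Suc N. f i (restrict w (I i))) = (\<Sum>i=1..N. f i (restrict x (I i))) + f N' z"
      using g(2,3) by (simp add: sumSuc N'_def)
    also have "\<dots> < (\<Sum>i=1..Suc N. \<integral>z. f i z \<partial>\<nu> i) + \<epsilon>"
      using x(2) \<open>f N' z \<le> _\<close> by (simp add: sumSuc N'_def)
    finally show ?thesis using g(1) by blast
  next
    case False
    have N1: "N \<ge> 1" using False by (cases N) (auto simp: S_def)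
    obtain k where k: "k \<in> {1..N}" "I N' \<inter> ?U \<subseteq> I k"
    proof -
      have "Suc N \<in> {2..Suc N}" using N1 by simp
      then obtain k where "k \<in> {1..Suc N - 1}" "I (Suc N) \<inter> (\<Union>j\<in>{1..Suc N - 1}. I j) \<subseteq> I k"
        using hA unfolding hypA_def by blast
      then show ?thesis using that by (simp add: N'_def)
    qed
    have kin: "k \<in> {1..Suc N}" using k by auto
    have SIk: "S \<subseteq> I k" using k by (simp add: S_def)
    have S_eq: "S = I k \<inter> I N'" using k by (auto simp: S_def)
    have marg: "distr (\<nu> k) (PiM S (\<lambda>_. lborel)) (\<lambda>z. restrict z S) = distr (\<nu> N') (PiM S (\<lambda>_. lborel)) (\<lambda>z. restrict z S)"
    proof -
      have "k \<in> {1..Suc N - 1}" using k by simp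
      moreover have "N' \<in> Uset (Suc N) I k" using k(1) False S_eq by (auto simp: Uset_def N'_def)
      ultimately show ?thesis using hA unfolding hypA_def S_eq by blast
    qed
    have finS: "finite S" using KN(4) by (simp add: S_def)
    obtain B2 where B2: "\<And>z. z \<in> K N' \<Longrightarrow> -B2 \<le> f N' z"
    proof -
      obtain B where "\<forall>v\<in>f N' ` K N'. norm v \<le> B"
        using compact_imp_bounded[OF compact_continuous_image[OF fN(2) KN(1)]] unfolding bounded_iff by blast
      then show ?thesis using that[of B] by force
    qed
    define G where "G = (\<lambda>x. \<Sum>i=1..N. f i (restrict x (I i)))"
    have Kc: "compact (Kglob I K N)"
      unfolding Kglob_def using hypA_D(1,2)[OF hA0] by (intro compact_glob) auto
    have Gc: "continuous_on (Kglob I K N) G"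
      unfolding G_def
    proof (intro continuous_on_sum)
      fix i assume i: "i \<in> {1..N}"
      show "continuous_on (Kglob I K N) (\<lambda>x. f i (restrict x (I i)))"
        by (rule continuous_on_compose2[OF _ continuous_on_subset[OF continuous_restrict]])
           (use hF0 i in \<open>auto simp: hypF_def Kglob_def\<close>)
    qed
    obtain B1 where B1: "\<And>x. x \<in> Kglob I K N \<Longrightarrow> -B1 \<le> G x"
    proof -
      obtain B where "\<forall>v\<in>G ` Kglob I K N. norm v \<le> B"
        using compact_imp_bounded[OF compact_continuous_image[OF Gc Kc]] unfolding bounded_iff by blast
      then show ?thesis using that[of B] by force
    qed
    have step: "\<exists>p. p \<in> Kglob I K N \<times> K N' \<and> G (fst p) + f N' (snd p) + real (Suc n) * Dd S (fst p) (snd p) < V + \<epsilon>/2" for n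
    proof -
      define L where "L = real (Suc n)"
      interpret hs: hLsetup "f N'" "K N'" S L B2
        by unfold_locales (use KN(2) B2 in \<open>auto simp: L_def\<close>)
      define h where "h = hL (f N') (K N') S L"
      have hc: "continuous_on UNIV h" unfolding h_def by (rule hs.h_cont)
      have hm: "h \<in> borel_measurable (PiM J (\<lambda>_. lborel))" for J by (rule cont_meas[OF hc])
      have hr: "h y = h (restrict y S)" for y unfolding h_def by (rule hs.h_cong) simp
      have hk: "h (restrict y (I k)) = h y" for y unfolding h_def by (rule hs.h_cong) (use SIk in auto)
      define f' where "f' = f(k := (\<lambda>x. f k x + h x))"
      have hF': "hypF N I K f'"
        unfolding hypF_def
      proof
        fix i assume i: "i \<in> {1..N}"
        have fi: "f i \<in> borel_measurable (PiM (I i) (\<lambda>_. lborel))" "continuous_on (K i) (f i)"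
          using hF0 i by (auto simp: hypF_def)
        show "f' i \<in> borel_measurable (PiM (I i) (\<lambda>_. lborel)) \<and> continuous_on (K i) (f' i)"
        proof (cases "i = k")
          case True
          then show ?thesis using fi
            by (auto simp: f'_def intro!: borel_measurable_add hm continuous_on_add continuous_on_subset[OF hc])
        qed (use fi in \<open>simp add: f'_def\<close>)
      qed
      have e4: "0 < \<epsilon>/4" using eps by simp
      obtain x where x: "x \<in> Kglob I K N" "(\<Sum>i=1..N. f' i (restrict x (I i))) < (\<Sum>i=1..N. \<integral>z. f' i z \<partial>\<nu> i) + \<epsilon>/4"
        using Suc.IH[OF hA0 hF' e4] by blast
      have lhs: "(\<Sum>i=1..N. f' i (restrict x (I i))) = G x + h x"
      proof -
        have "(\<Sum>i=1..N. f' i (restrict x (I i))) = (\<Sum>i=1..N. (if i = k then f i (restrict x (I i)) + h (restrict x (I k)) else f i (restrict x (I i))))"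
          by (intro sum.cong) (auto simp: f'_def)
        also have "\<dots> = G x + h (restrict x (I k))" unfolding G_def by (rule sum_if_k) (use k in auto)
        finally show ?thesis by (simp add: hk)
      qed
      have intfk: "integrable (\<nu> k) (f k)" and inthk: "integrable (\<nu> k) h"
        using hF0 k by (auto simp: hypF_def intro!: hypA_int[OF hA0] hm continuous_on_subset[OF hc])
      have inthN: "integrable (\<nu> N') h"
        by (rule hypA_int[OF hA N'in continuous_on_subset[OF hc] hm]) simp
      have rhs: "(\<Sum>i=1..N. \<integral>z. f' i z \<partial>\<nu> i) = (\<Sum>i=1..N. \<integral>z. f i z \<partial>\<nu> i) + (\<integral>z. h z \<partial>\<nu> k)"
      proof -
        have "(\<Sum>i=1..N. \<integral>z. f' i z \<partial>\<nu> i) = (\<Sum>i=1..N. (if i = k then (\<integral>z. f i z \<partial>\<nu> i) + (\<integral>z. h z \<partial>\<nu> k) else (\<integral>z. f i z \<partial>\<nu> i)))"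
          by (intro sum.cong) (auto simp: f'_def intfk inthk)
        also have "\<dots> = (\<Sum>i=1..N. \<integral>z. f i z \<partial>\<nu> i) + (\<integral>z. h z \<partial>\<nu> k)"
          by (rule sum_if_k) (use k in auto)
        finally show ?thesis .
      qed
      have int_eq: "(\<integral>z. h z \<partial>\<nu> k) = (\<integral>z. h z \<partial>\<nu> N')"
      proof -
        have rm: "(\<lambda>z. restrict z S) \<in> measurable (\<nu> j) (PiM S (\<lambda>_. lborel))" if "j \<in> {1..Suc N}" "S \<subseteq> I j" for j
          by (subst measurable_cong_sets[OF hypA_D(5)[OF hA that(1)] refl]) (rule measurable_restrict_subset[OF that(2)])
        have "(\<integral>z. h z \<partial>\<nu> k) = (\<integral>z. h (restrict z S) \<partial>\<nu> k)" by (simp add: hr[symmetric])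
        also have "\<dots> = (\<integral>y. h y \<partial>distr (\<nu> k) (PiM S (\<lambda>_. lborel)) (\<lambda>z. restrict z S))"
          by (rule integral_distr[symmetric, OF rm[OF kin SIk] hm])
        also have "\<dots> = (\<integral>y. h y \<partial>distr (\<nu> N') (PiM S (\<lambda>_. lborel)) (\<lambda>z. restrict z S))"
          by (simp add: marg)
        also have "\<dots> = (\<integral>z. h (restrict z S) \<partial>\<nu> N')"
          by (rule integral_distr[OF rm[OF N'in] hm]) (simp add: S_def)
        also have "\<dots> = (\<integral>z. h z \<partial>\<nu> N')" by (simp add: hr[symmetric])
        finally show ?thesis .
      qed
      have hleN: "(\<integral>z. h z \<partial>\<nu> N') \<le> (\<integral>z. f N' z \<partial>\<nu> N')"
        by (rule integral_mono_AE[OF inthN intN]) (use AEN in \<open>auto elim!: AE_mp simp: h_def hs.h_le_f\<close>)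
      have "G x + h x < V + \<epsilon>/4"
      proof -
        have "V = (\<Sum>i=1..N. \<integral>z. f i z \<partial>\<nu> i) + (\<integral>z. f N' z \<partial>\<nu> N')"
          unfolding V_def by (rule sumSuc)
        then show ?thesis using x(2) lhs rhs int_eq hleN by linarith
      qed
      moreover obtain z where z: "z \<in> K N'" "f N' z + L * Dd S x z < h x + \<epsilon>/4"
      proof -
        have "Inf ((\<lambda>z. f N' z + L * Dd S x z) ` K N') < h x + \<epsilon>/4" using eps by (simp add: h_def hL_def)
        moreover have "(\<lambda>z. f N' z + L * Dd S x z) ` K N' \<noteq> {}" using KN(2) by simp
        ultimately have "\<exists>v\<in>(\<lambda>z. f N' z + L * Dd S x z) ` K N'. v < h x + \<epsilon>/4"
          by (intro cInf_lessD)
        then obtain z where "z \<in> K N'" "f N' z + L * Dd S x z < h x + \<epsilon>/4" by blast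
        then show ?thesis by (rule that)
      qed
      ultimately have "G x + f N' z + L * Dd S x z < V + \<epsilon>/2" by linarith
      then show ?thesis using x(1) z(1) by (intro exI[of _ "(x, z)"]) (simp add: L_def)
    qed
    then obtain P where P: "\<And>n. P n \<in> Kglob I K N \<times> K N'"
      "\<And>n. G (fst (P n)) + f N' (snd (P n)) + real (Suc n) * Dd S (fst (P n)) (snd (P n)) < V + \<epsilon>/2"
      by metis
    have Cc: "compact (Kglob I K N \<times> K N')" by (rule compact_Times[OF Kc KN(1)])
    obtain l r where l: "l \<in> Kglob I K N \<times> K N'" and r: "strict_mono r" and lim: "(P \<circ> r) \<longlonglongrightarrow> l"
      using compact_imp_seq_compact[OF Cc] P(1) unfolding seq_compact_def by metis
    define \<Phi> where "\<Phi> = (\<lambda>p. G (fst p) + f N' (snd p))"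
    define D where "D = (\<lambda>p. Dd S (fst p) (snd p))"
    have \<Phi>c: "continuous_on (Kglob I K N \<times> K N') \<Phi>"
      unfolding \<Phi>_def
      by (intro continuous_on_add continuous_on_compose2[OF Gc continuous_on_fst] continuous_on_compose2[OF fN(2) continuous_on_snd])
         auto
    have Dc: "continuous_on UNIV D" unfolding D_def by (rule Dd_cont2)
    define C0 where "C0 = V + \<epsilon>/2 + B1 + B2"
    have bnd: "real (Suc n) * D (P n) < C0" for n
      using P(2)[of n] B1[of "fst (P n)"] B2[of "snd (P n)"] P(1)[of n] by (auto simp: D_def C0_def mem_Times_iff)
    have C0pos: "0 \<le> C0" using bnd[of 0] Dd_nonneg[of S] by (smt (verit) D_def mult_nonneg_nonneg of_nat_0_le_iff)
    have "D l \<le> 0"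
    proof (rule LIMSEQ_le)
      show "(\<lambda>n. D ((P \<circ> r) n)) \<longlonglongrightarrow> D l"
        by (rule continuous_on_tendsto_compose[OF Dc lim]) auto
      show "(\<lambda>n. C0 * inverse (real (Suc n))) \<longlonglongrightarrow> 0"
        using tendsto_mult_right_zero[OF LIMSEQ_inverse_real_of_nat, of C0] by simp
      show "\<exists>N. \<forall>n\<ge>N. D ((P \<circ> r) n) \<le> C0 * inverse (real (Suc n))"
      proof (intro exI allI impI)
        fix n :: nat
        have rn: "n \<le> r n" by (rule seq_suble[OF r])
        have "D (P (r n)) \<le> C0 * inverse (real (Suc (r n)))"
          using bnd[of "r n"] by (simp add: field_simps)
        also have "\<dots> \<le> C0 * inverse (real (Suc n))"
          using rn C0pos by (intro mult_left_mono) (auto simp: field_simps)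
        finally show "D ((P \<circ> r) n) \<le> C0 * inverse (real (Suc n))" by simp
      qed
    qed
    then have D0: "D l = 0" using Dd_nonneg[of S "fst l" "snd l"] by (simp add: D_def)
    have agree: "\<forall>l0 \<in> I (Suc N) \<inter> ?U. fst l l0 = snd l l0"
    proof -
      have "\<forall>l0\<in>S. \<bar>fst l l0 - snd l l0\<bar> = 0"
        using D0 finS by (simp add: D_def Dd_def sum_nonneg_eq_0_iff)
      then show ?thesis by (simp add: S_def N'_def)
    qed
    have "\<Phi> l \<le> V + \<epsilon>/2"
    proof (rule LIMSEQ_le_const2)
      show "(\<lambda>n. \<Phi> ((P \<circ> r) n)) \<longlonglongrightarrow> \<Phi> l"
        by (rule continuous_on_tendsto_compose[OF \<Phi>c lim l]) (use P(1) in auto)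
      show "\<exists>N. \<forall>n\<ge>N. \<Phi> ((P \<circ> r) n) \<le> V + \<epsilon>/2"
      proof (intro exI allI impI)
        fix n :: nat
        have "0 \<le> real (Suc (r n)) * D (P (r n))" by (simp add: D_def Dd_nonneg)
        then show "\<Phi> ((P \<circ> r) n) \<le> V + \<epsilon>/2" using P(2)[of "r n"] by (simp add: \<Phi>_def D_def)
      qed
    qed
    have l1: "fst l \<in> Kglob I K N" and l2: "snd l \<in> K (Suc N)" using l by (auto simp: N'_def)
    define w where "w = (\<lambda>l0. if l0 \<in> ?U then fst l l0 else snd l l0)"
    note g = glue[OF l1 l2 KN(3)[unfolded N'_def] agree, folded w_def]
    have "(\<Sum>i=1..Suc N. f i (restrict w (I i))) = \<Phi> l"
      using g(2,3) by (simp add: sumSuc \<Phi>_def G_def N'_def)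
    also have "\<dots> < V + \<epsilon>" using \<open>\<Phi> l \<le> _\<close> eps by simp
    finally show ?thesis using g(1) unfolding V_def by blast
  qed
qed


locale thm_setup =
  fixes n m N :: nat
    and p q :: "nat \<Rightarrow> mpoly" and g :: "nat \<Rightarrow> mpoly"
    and I J :: "nat \<Rightarrow> nat set" and M :: "nat \<Rightarrow> real"
  assumes I_sub: "\<forall>i\<in>{1..N}. I i \<subseteq> {1..n}"
    and J_sub: "\<forall>i\<in>{1..N}. J i \<subseteq> {1..m}"
    and I_cover: "(\<Union>i\<in>{1..N}. I i) = {1..n}"
    and J_cover: "(\<Union>i\<in>{1..N}. J i) = {1..m}"
    and cond_i: "\<forall>i\<in>{1..N}. mpoly_vars (p i) \<subseteq> I i \<and> mpoly_vars (q i) \<subseteq> I i"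
    and cond_ii: "\<forall>i\<in>{1..N}. \<forall>j\<in>J i. mpoly_vars (g j) \<subseteq> I i"
    and cond_iii: "\<forall>i\<in>{1..N}. M i > 0 \<and> (\<exists>k\<in>J i. g k = ball_poly (M i) (I i))"
    and cond_iv: "\<forall>i\<in>{2..N}. \<exists>k\<in>{1..i-1}. I i \<inter> (\<Union>j\<in>{1..i-1}. I j) \<subseteq> I k"
    and q_pos_Ki: "\<forall>i\<in>{1..N}. \<forall>z\<in>semialg (I i) g (J i). mpoly_eval (q i) z > 0"
begin

abbreviation "KK i \<equiv> semialg (I i) g (J i)"

lemma finI: "i \<in> {1..N} \<Longrightarrow> finite (I i)"
  using I_sub finite_subset by blast

lemma finJ: "i \<in> {1..N} \<Longrightarrow> finite (J i)"
  using J_sub finite_subset by blast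

lemma KK_sub: "KK i \<subseteq> PiE (I i) (\<lambda>_. UNIV)"
  by (auto simp: semialg_def)

lemma KK_compact:
  assumes i: "i \<in> {1..N}"
  shows "compact (KK i)"
proof -
  obtain k where k: "k \<in> J i" "g k = ball_poly (M i) (I i)" and M0: "M i > 0"
    using cond_iii i by blast
  let ?B = "PiE (I i) (\<lambda>_. cball (0::real) (M i + 1))"
  let ?C = "\<Inter>j\<in>J i. {z::nat\<Rightarrow>real. 0 \<le> mpoly_eval (g j) z}"
  have "KK i = ?B \<inter> ?C"
  proof (intro equalityI subsetI)
    fix z assume z: "z \<in> KK i"
    have "mpoly_eval (g k) z \<ge> 0" using z k(1) by (auto simp: semialg_def)
    then have sum: "(\<Sum>l\<in>I i. z l ^ 2) \<le> M i"
      using k(2) mpoly_eval_ball[OF finI[OF i]] by simp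
    have "z l \<in> cball 0 (M i + 1)" if l: "l \<in> I i" for l
    proof -
      have "z l ^ 2 \<le> (\<Sum>l\<in>I i. z l ^ 2)"
        by (rule member_le_sum) (use l finI[OF i] in auto)
      then have a: "z l ^ 2 \<le> M i" using sum by linarith
      have b: "M i \<le> (M i + 1) ^ 2"
      proof -
        have "0 \<le> M i * M i" by simp
        then show ?thesis using M0 by (simp add: power2_eq_square algebra_simps)
      qed
      have "\<bar>z l\<bar> ^ 2 \<le> (M i + 1) ^ 2" using a b by simp
      then have "\<bar>z l\<bar> \<le> M i + 1" by (rule power2_le_imp_le) (use M0 in simp)
      then show ?thesis by (simp add: mem_cball_0)
    qed
    then show "z \<in> ?B \<inter> ?C" using z by (auto simp: semialg_def PiE_def Pi_def)
  next
    fix z assume "z \<in> ?B \<inter> ?C"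
    then show "z \<in> KK i" by (auto simp: semialg_def PiE_def Pi_def)
  qed
  moreover have "closed ?C"
    by (intro closed_INT ballI closed_Collect_le continuous_on_const mpoly_eval_continuous)
  ultimately show ?thesis using compact_Int_closed[OF compact_box] by simp
qed

lemma KK_sets:
  assumes i: "i \<in> {1..N}"
  shows "KK i \<in> sets (PiM (I i) (\<lambda>_. lborel))"
proof -
  have "KK i = {z \<in> space (PiM (I i) (\<lambda>_. lborel)). \<forall>j\<in>J i. 0 \<le> mpoly_eval (g j) z}"
    by (simp add: semialg_def space_PiM)
  also have "\<dots> \<in> sets (PiM (I i) (\<lambda>_. lborel))"
  proof (rule sets.sets_Collect_finite_All[OF _ finJ[OF i]])
    fix j show "{z \<in> space (PiM (I i) (\<lambda>_. lborel)). 0 \<le> mpoly_eval (g j) z} \<in> sets (PiM (I i) (\<lambda>_. lborel))"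
      by (intro borel_measurable_le borel_measurable_const cont_meas mpoly_eval_continuous)
  qed
  finally show ?thesis .
qed

lemma K_eq: "semialg {1..n} g {1..m} = Kglob I KK N"
proof (intro equalityI subsetI)
  fix x assume x: "x \<in> semialg {1..n} g {1..m}"
  have "restrict x (I i) \<in> KK i" if i: "i \<in> {1..N}" for i
  proof -
    have "0 \<le> mpoly_eval (g j) (restrict x (I i))" if j: "j \<in> J i" for j
    proof -
      have "j \<in> {1..m}" using J_sub i j by blast
      then have "0 \<le> mpoly_eval (g j) x" using x by (simp add: semialg_def)
      then show ?thesis using mpoly_eval_restrict cond_ii i j by metis
    qed
    then show ?thesis by (simp add: semialg_def)
  qed
  then show "x \<in> Kglob I KK N" using x unfolding Kglob_def I_cover by (simp add: semialg_def)
next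
  fix x assume x: "x \<in> Kglob I KK N"
  have "0 \<le> mpoly_eval (g j) x" if j: "j \<in> {1..m}" for j
  proof -
    obtain i where i: "i \<in> {1..N}" "j \<in> J i" using j J_cover by blast
    then have "restrict x (I i) \<in> KK i" using x by (simp add: Kglob_def)
    then have "0 \<le> mpoly_eval (g j) (restrict x (I i))" using i by (simp add: semialg_def)
    then show ?thesis using mpoly_eval_restrict cond_ii i by metis
  qed
  then show "x \<in> semialg {1..n} g {1..m}" using x unfolding Kglob_def I_cover by (simp add: semialg_def)
qed

end


context thm_setup begin

lemma lower:
  assumes feas: "feasible_cs n m N I J g p q \<mu>"
  shows "(INF x\<in>semialg {1..n} g {1..m}. ereal (\<Sum>i=1..N. mpoly_eval (p i) x / mpoly_eval (q i) x))
          \<le> ereal (\<Sum>i=1..N. LINT z:KK i|\<mu> i. mpoly_eval (p i) z)"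
proof -
  define \<nu> where "\<nu> i = density (\<mu> i) (\<lambda>z. ennreal (mpoly_eval (q i) z))" for i
  define f where "f i = (\<lambda>z. mpoly_eval (p i) z / mpoly_eval (q i) z)" for i
  have F1: "sets (\<mu> i) = sets (PiM (I i) (\<lambda>_. lborel))" "finite_measure (\<mu> i)"
    "emeasure (\<mu> i) (space (\<mu> i) - KK i) = 0" "(LINT z : KK i | \<mu> i. mpoly_eval (q i) z) = 1"
    if "i \<in> {1..N}" for i using feas that unfolding feasible_cs_def by blast+
  have Ksets: "KK i \<in> sets (\<mu> i)" if "i \<in> {1..N}" for i using KK_sets[OF that] F1(1)[OF that] by simp
  have AEK: "AE z in \<mu> i. z \<in> KK i" if i: "i \<in> {1..N}" for i
  proof (rule AE_I')
    show "space (\<mu> i) - KK i \<in> null_sets (\<mu> i)"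
      using F1(3)[OF i] Ksets[OF i] by (simp add: null_sets_def)
  qed auto
  have meas: "h \<in> borel_measurable (\<mu> i)" if "i \<in> {1..N}" "continuous_on UNIV h" for i and h :: "(nat \<Rightarrow> real) \<Rightarrow> real"
    by (rule meas_transfer[OF F1(1)[OF that(1)] cont_meas[OF that(2)]])
  have qm: "mpoly_eval (q i) \<in> borel_measurable (\<mu> i)" if "i \<in> {1..N}" for i
    by (rule meas[OF that mpoly_eval_continuous])
  have pm: "mpoly_eval (p i) \<in> borel_measurable (\<mu> i)" if "i \<in> {1..N}" for i
    by (rule meas[OF that mpoly_eval_continuous])
  have qpos: "AE z in \<mu> i. 0 < mpoly_eval (q i) z" if i: "i \<in> {1..N}" for i
    using AEK[OF i] by eventually_elim (use q_pos_Ki i in auto)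
  have intq: "integrable (\<mu> i) (\<lambda>z. indicator (KK i) z *\<^sub>R mpoly_eval (q i) z)" if i: "i \<in> {1..N}" for i
  proof (rule ccontr)
    assume "\<not> ?thesis"
    then have "(LINT z : KK i | \<mu> i. mpoly_eval (q i) z) = 0"
      unfolding set_lebesgue_integral_def by (rule not_integrable_integral_eq)
    then show False using F1(4)[OF i] by simp
  qed
  have hA: "hypA N I KK \<nu>"
    unfolding hypA_def
  proof (intro conjI ballI)
    fix i assume i: "i \<in> {1..N}"
    show "finite (I i)" by (rule finI[OF i])
    show "compact (KK i)" by (rule KK_compact[OF i])
    show "KK i \<subseteq> PiE (I i) (\<lambda>_. UNIV)" by (rule KK_sub)
    show "KK i \<in> sets (\<nu> i)" using Ksets[OF i] by (simp add: \<nu>_def)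
    show "sets (\<nu> i) = sets (PiM (I i) (\<lambda>_. lborel))" using F1(1)[OF i] by (simp add: \<nu>_def)
    have sp: "space (\<nu> i) = space (\<mu> i)" by (simp add: \<nu>_def)
    have "emeasure (\<nu> i) (space (\<nu> i)) = (\<integral>\<^sup>+z. ennreal (mpoly_eval (q i) z) * indicator (space (\<mu> i)) z \<partial>\<mu> i)"
      unfolding \<nu>_def space_density by (rule emeasure_density) (use qm[OF i] in auto)
    also have "\<dots> = (\<integral>\<^sup>+z. ennreal (indicator (KK i) z *\<^sub>R mpoly_eval (q i) z) \<partial>\<mu> i)"
      by (rule nn_integral_cong_AE) (use AEK[OF i] AE_space in \<open>eventually_elim, simp add: indicator_def\<close>)
    also have "\<dots> = ennreal (\<integral>z. indicator (KK i) z *\<^sub>R mpoly_eval (q i) z \<partial>\<mu> i)"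
      by (rule nn_integral_eq_integral[OF intq[OF i]]) (use qpos[OF i] in \<open>eventually_elim, simp add: indicator_def\<close>)
    also have "\<dots> = 1" using F1(4)[OF i] by (simp add: set_lebesgue_integral_def)
    finally show "emeasure (\<nu> i) (space (\<nu> i)) = 1" .
    have "emeasure (\<nu> i) (space (\<nu> i) - KK i) = (\<integral>\<^sup>+z. ennreal (mpoly_eval (q i) z) * indicator (space (\<mu> i) - KK i) z \<partial>\<mu> i)"
      unfolding \<nu>_def space_density by (rule emeasure_density) (use qm[OF i] Ksets[OF i] in auto)
    also have "\<dots> = (\<integral>\<^sup>+z. 0 \<partial>\<mu> i)"
      by (rule nn_integral_cong_AE) (use AEK[OF i] in \<open>eventually_elim, simp add: indicator_def\<close>)
    finally show "emeasure (\<nu> i) (space (\<nu> i) - KK i) = 0" by simp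
  next
    fix i j assume i: "i \<in> {1..N-1}" and j: "j \<in> Uset N I i"
    show "distr (\<nu> i) (PiM (I i \<inter> I j) (\<lambda>_. lborel)) (\<lambda>z. restrict z (I i \<inter> I j)) = distr (\<nu> j) (PiM (I i \<inter> I j) (\<lambda>_. lborel)) (\<lambda>z. restrict z (I i \<inter> I j))"
      using feas i j unfolding feasible_cs_def marginal_def \<nu>_def by blast
  next
    fix i assume "i \<in> {2..N}"
    then show "\<exists>k\<in>{1..i-1}. I i \<inter> (\<Union>j\<in>{1..i-1}. I j) \<subseteq> I k" using cond_iv by blast
  qed
  have hF: "hypF N I KK f"
    unfolding hypF_def
  proof
    fix i assume i: "i \<in> {1..N}"
    show "f i \<in> borel_measurable (PiM (I i) (\<lambda>_. lborel)) \<and> continuous_on (KK i) (f i)"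
      unfolding f_def
      by (intro conjI borel_measurable_divide cont_meas mpoly_eval_continuous continuous_on_divide
            continuous_on_subset[OF mpoly_eval_continuous]) (use q_pos_Ki i in fastforce)+
  qed
  have intf: "(\<integral>z. f i z \<partial>\<nu> i) = (LINT z:KK i|\<mu> i. mpoly_eval (p i) z)" if i: "i \<in> {1..N}" for i
  proof -
    have fm: "f i \<in> borel_measurable (\<mu> i)"
      unfolding f_def using pm[OF i] qm[OF i] by (rule borel_measurable_divide)
    have "(\<integral>z. f i z \<partial>\<nu> i) = (\<integral>z. mpoly_eval (q i) z *\<^sub>R f i z \<partial>\<mu> i)"
      unfolding \<nu>_def by (rule integral_density[OF fm qm[OF i]]) (use qpos[OF i] in \<open>eventually_elim, simp\<close>)
    also have "\<dots> = (\<integral>z. indicator (KK i) z *\<^sub>R mpoly_eval (p i) z \<partial>\<mu> i)"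
    proof (rule integral_cong_AE)
      show "(\<lambda>z. mpoly_eval (q i) z *\<^sub>R f i z) \<in> borel_measurable (\<mu> i)"
        using qm[OF i] fm by (rule borel_measurable_scaleR)
      show "(\<lambda>z. indicator (KK i) z *\<^sub>R mpoly_eval (p i) z) \<in> borel_measurable (\<mu> i)"
        using Ksets[OF i] pm[OF i] by (intro borel_measurable_scaleR borel_measurable_indicator)
      show "AE z in \<mu> i. mpoly_eval (q i) z *\<^sub>R f i z = indicator (KK i) z *\<^sub>R mpoly_eval (p i) z"
        using AEK[OF i] qpos[OF i] by eventually_elim (simp add: f_def)
    qed
    finally show ?thesis by (simp add: set_lebesgue_integral_def)
  qed
  define V where "V = (\<Sum>i=1..N. LINT z:KK i|\<mu> i. mpoly_eval (p i) z)"
  have V: "V = (\<Sum>i=1..N. \<integral>z. f i z \<partial>\<nu> i)" unfolding V_def by (rule sum.cong) (simp_all add: intf)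
  show ?thesis
    unfolding V_def[symmetric]
  proof (rule ereal_le_epsilon2)
    fix e :: real assume e: "0 < e"
    obtain x where x: "x \<in> Kglob I KK N" "(\<Sum>i=1..N. f i (restrict x (I i))) < (\<Sum>i=1..N. \<integral>z. f i z \<partial>\<nu> i) + e"
      using claimA[OF hA hF e] by blast
    have xK: "x \<in> semialg {1..n} g {1..m}" using x(1) K_eq by simp
    have "(\<Sum>i=1..N. f i (restrict x (I i))) = (\<Sum>i=1..N. mpoly_eval (p i) x / mpoly_eval (q i) x)"
      by (intro sum.cong refl) (use cond_i in \<open>simp add: f_def mpoly_eval_restrict\<close>)
    then have "(\<Sum>i=1..N. mpoly_eval (p i) x / mpoly_eval (q i) x) \<le> V + e" using x(2) V by simp
    then have "(INF x\<in>semialg {1..n} g {1..m}. ereal (\<Sum>i=1..N. mpoly_eval (p i) x / mpoly_eval (q i) x)) \<le> ereal (V + e)"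
      using xK by (intro INF_lower2[OF xK]) simp
    then show "(INF x\<in>semialg {1..n} g {1..m}. ereal (\<Sum>i=1..N. mpoly_eval (p i) x / mpoly_eval (q i) x)) \<le> ereal V + ereal e"
      by simp
  qed
qed

end


definition wdist :: "'a set \<Rightarrow> real \<Rightarrow> 'b measure \<Rightarrow> ('a \<Rightarrow> 'b) \<Rightarrow> 'b measure" where
  "wdist R c P F = distr (density (count_space R) (\<lambda>_. ennreal c)) P F"

lemma wd_meas: "F \<in> R \<rightarrow> space P \<Longrightarrow> F \<in> measurable (density (count_space R) (\<lambda>_. ennreal c)) P"
  by (simp add: measurable_count_space_eq1)

lemma wd_sets: "sets (wdist R c P F) = sets P"
  by (simp add: wdist_def)

lemma wd_emeasure:
  assumes "finite R" "F \<in> R \<rightarrow> space P" "A \<in> sets P"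
  shows "emeasure (wdist R c P F) A = ennreal c * of_nat (card {S\<in>R. F S \<in> A})"
proof -
  have "emeasure (wdist R c P F) A = emeasure (density (count_space R) (\<lambda>_. ennreal c)) (F -` A \<inter> R)"
    unfolding wdist_def by (subst emeasure_distr[OF wd_meas[OF assms(2)] assms(3)]) simp
  also have "\<dots> = ennreal c * emeasure (count_space R) (F -` A \<inter> R)"
    by (rule emeasure_density_const) simp
  also have "F -` A \<inter> R = {S\<in>R. F S \<in> A}" by auto
  also have "emeasure (count_space R) {S\<in>R. F S \<in> A} = of_nat (card {S\<in>R. F S \<in> A})"
    using assms(1) by (intro emeasure_count_space_finite) auto
  finally show ?thesis .
qed

lemma wd_integral:
  fixes h :: "'b \<Rightarrow> real"
  assumes "finite R" "0 \<le> c" "F \<in> R \<rightarrow> space P" "h \<in> borel_measurable P"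
  shows "(\<integral>z. h z \<partial>wdist R c P F) = c * (\<Sum>S\<in>R. h (F S))"
proof -
  have "(\<integral>z. h z \<partial>wdist R c P F) = (\<integral>S. h (F S) \<partial>density (count_space R) (\<lambda>_. ennreal c))"
    unfolding wdist_def by (rule integral_distr[OF wd_meas[OF assms(3)] assms(4)])
  also have "\<dots> = (\<integral>S. c *\<^sub>R h (F S) \<partial>count_space R)"
    by (rule integral_density) (use assms(2) in auto)
  also have "\<dots> = (\<Sum>S\<in>R. c * h (F S))"
    using assms(1) by (simp add: lebesgue_integral_count_space_finite sum_distrib_left)
  finally show ?thesis by (simp only: sum_distrib_left)
qed

lemma sflip_PiE: "sflip S I z \<in> PiE I (\<lambda>_. UNIV)"
  by (simp add: sflip_def)

lemma sflip_restrict_in: "sflip S I (restrict z I) = sflip S I z"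
  by (auto simp: sflip_def restrict_def fun_eq_iff)

lemma restrict_sflip: "I' \<subseteq> I \<Longrightarrow> restrict (sflip S I z) I' = sflip S I' z"
  by (auto simp: sflip_def restrict_def fun_eq_iff)

lemma sflip_sflip: "sflip T I (sflip S I z) = sflip ((S - T) \<union> (T - S)) I z"
proof
  fix l show "sflip T I (sflip S I z) l = sflip ((S - T) \<union> (T - S)) I z l"
    by (cases "l \<in> I"; cases "l \<in> S"; cases "l \<in> T") (simp_all add: sflip_def)
qed

lemma sflip_invol: assumes "z \<in> PiE I (\<lambda>_. UNIV)" shows "sflip T I (sflip T I z) = z"
proof
  fix l show "sflip T I (sflip T I z) l = z l"
  proof (cases "l \<in> I")
    case False then show ?thesis using assms by (simp add: sflip_def PiE_def extensional_def)
  qed (cases "l \<in> T"; simp add: sflip_def)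
qed

lemma sflip_meas: "sflip T I \<in> measurable (PiM I (\<lambda>_. lborel)) (PiM I (\<lambda>_. lborel))"
proof -
  have m: "(\<lambda>z i. if i \<in> I then (if i \<in> T then - z i else z i) else undefined) \<in> measurable (PiM I (\<lambda>_. lborel)) (PiM I (\<lambda>_. lborel))"
  proof (rule measurable_PiM_single')
    fix l assume l: "l \<in> I"
    have c: "(\<lambda>z. z l) \<in> measurable (PiM I (\<lambda>_. lborel)) lborel"
      by (rule measurable_component_singleton[OF l])
    then have c': "(\<lambda>z. z l) \<in> borel_measurable (PiM I (\<lambda>_. lborel))"
      by (simp only: measurable_lborel1)
    have "(\<lambda>z. if l \<in> T then - z l else z l) \<in> borel_measurable (PiM I (\<lambda>_. lborel))"
      by (cases "l \<in> T") (simp_all add: c' borel_measurable_uminus)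
    then show "(\<lambda>z. if l \<in> I then if l \<in> T then - z l else z l else undefined) \<in> measurable (PiM I (\<lambda>_. lborel)) lborel"
      using l by (simp only: measurable_lborel1 if_True)
  next
    show "(\<lambda>z i. if i \<in> I then if i \<in> T then - z i else z i else undefined) \<in> space (PiM I (\<lambda>_. lborel)) \<rightarrow> PiE I (\<lambda>i. space lborel)"
      by (simp add: PiE_def extensional_def Pi_def)
  qed
  have eq: "(\<lambda>z i. if i \<in> I then (if i \<in> T then - z i else z i) else undefined) = sflip T I"
    by (simp add: sflip_def restrict_def fun_eq_iff)
  show ?thesis unfolding eq[symmetric] by (rule m)
qed

lemma even_symdiff:
  fixes f :: "nat \<Rightarrow> nat"
  assumes "finite S" "finite T" "even (sum f S)" "even (sum f T)"
  shows "even (sum f ((S - T) \<union> (T - S)))"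
proof -
  have a0: "sum f S = sum f (S - (S \<inter> T)) + sum f (S \<inter> T)"
    by (rule sum.subset_diff) (use assms in auto)
  have b0: "sum f T = sum f (T - (S \<inter> T)) + sum f (S \<inter> T)"
    by (rule sum.subset_diff) (use assms in auto)
  have e1: "S - (S \<inter> T) = S - T" and e2: "T - (S \<inter> T) = T - S" by blast+
  have c: "sum f ((S - T) \<union> (T - S)) = sum f (S - T) + sum f (T - S)"
    using assms(1,2) by (intro sum.union_disjoint) auto
  show ?thesis using assms(3,4) unfolding a0 b0 c e1 e2 by presburger
qed


context thm_setup begin

abbreviation "RR \<equiv> sign_syms n (supp_set N m p q g)"

lemma RR_sub: "S \<in> RR \<Longrightarrow> S \<subseteq> {1..n}"
  by (simp add: sign_syms_def)

lemma RR_fin: "finite RR"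
proof (rule finite_subset)
  show "RR \<subseteq> Pow {1..n}" by (auto simp: sign_syms_def)
qed simp

lemma RR_empty: "{} \<in> RR"
  by (simp add: sign_syms_def)

lemma RR_card: "0 < card RR"
  using RR_fin RR_empty card_gt_0_iff by blast

lemma RR_symdiff:
  assumes "S \<in> RR" "T \<in> RR"
  shows "(S - T) \<union> (T - S) \<in> RR"
proof -
  have fS: "finite S" "finite T" using RR_sub[OF assms(1)] RR_sub[OF assms(2)] finite_subset by blast+
  show ?thesis
    using assms RR_sub[OF assms(1)] RR_sub[OF assms(2)]
    unfolding sign_syms_def by (auto intro!: even_symdiff fS)
qed

lemma keys_p: "i \<in> {1..N} \<Longrightarrow> Poly_Mapping.keys (p i) \<subseteq> supp_set N m p q g"
  by (auto simp: supp_set_def)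
lemma keys_q: "i \<in> {1..N} \<Longrightarrow> Poly_Mapping.keys (q i) \<subseteq> supp_set N m p q g"
  by (auto simp: supp_set_def)
lemma keys_g: "j \<in> {1..m} \<Longrightarrow> Poly_Mapping.keys (g j) \<subseteq> supp_set N m p q g"
  by (auto simp: supp_set_def)

lemma inv_poly:
  assumes S: "S \<in> RR" and k: "Poly_Mapping.keys P \<subseteq> supp_set N m p q g" and v: "mpoly_vars P \<subseteq> I'"
  shows "mpoly_eval P (sflip S I' z) = mpoly_eval P z"
proof (rule mpoly_eval_flip)
  show "finite S" using RR_sub[OF S] finite_subset by blast
  fix \<alpha> assume "\<alpha> \<in> Poly_Mapping.keys P"
  then show "even (\<Sum>l\<in>S. Poly_Mapping.lookup \<alpha> l)" using S k by (auto simp: sign_syms_def)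
next
  fix l assume "l \<in> mpoly_vars P"
  then have "l \<in> I'" using v by blast
  then show "sflip S I' z l = (if l \<in> S then - z l else z l)" by (simp add: sflip_def)
qed

end


context thm_setup begin

lemma upper:
  assumes x: "x \<in> semialg {1..n} g {1..m}"
  shows "rho_cs n m N I J g p q \<le> ereal (\<Sum>i=1..N. mpoly_eval (p i) x / mpoly_eval (q i) x)"
proof -
  define PP where "PP i = PiM (I i) (\<lambda>_::nat. lborel::real measure)" for i
  define pt where "pt i S = sflip S (I i) (restrict x (I i))" for i S
  define c where "c i = 1 / (real (card RR) * mpoly_eval (q i) x)" for i
  define \<mu> where "\<mu> i = wdist RR (c i) (PP i) (pt i)" for i
  have xG: "x \<in> Kglob I KK N" using x K_eq by simp
  have yK: "restrict x (I i) \<in> KK i" if "i \<in> {1..N}" for i using xG that by (simp add: Kglob_def)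
  have qx: "mpoly_eval (q i) x > 0" if i: "i \<in> {1..N}" for i
    using q_pos_Ki i yK[OF i] mpoly_eval_restrict cond_i by metis
  have cpos: "c i > 0" if "i \<in> {1..N}" for i using qx[OF that] RR_card by (simp add: c_def)
  have ptp: "mpoly_eval (p i) (pt i S) = mpoly_eval (p i) x" if i: "i \<in> {1..N}" and S: "S \<in> RR" for i S
    unfolding pt_def using inv_poly[OF S keys_p[OF i]] cond_i i mpoly_eval_restrict by metis
  have ptq: "mpoly_eval (q i) (pt i S) = mpoly_eval (q i) x" if i: "i \<in> {1..N}" and S: "S \<in> RR" for i S
    unfolding pt_def using inv_poly[OF S keys_q[OF i]] cond_i i mpoly_eval_restrict by metis
  have ptK: "pt i S \<in> KK i" if i: "i \<in> {1..N}" and S: "S \<in> RR" for i S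
  proof -
    have "0 \<le> mpoly_eval (g j) (pt i S)" if j: "j \<in> J i" for j
    proof -
      have jm: "j \<in> {1..m}" using J_sub i j by blast
      have "mpoly_eval (g j) (pt i S) = mpoly_eval (g j) (restrict x (I i))"
        unfolding pt_def by (rule inv_poly[OF S keys_g[OF jm]]) (use cond_ii i j in blast)
      then show ?thesis using yK[OF i] j by (simp add: semialg_def)
    qed
    then show ?thesis by (simp add: semialg_def pt_def sflip_PiE)
  qed
  have ptsp: "pt i \<in> RR \<rightarrow> space (PP i)" for i
    by (auto simp: pt_def PP_def space_PiM sflip_PiE)
  have sets\<mu>: "sets (\<mu> i) = sets (PP i)" for i by (simp add: \<mu>_def wd_sets)
  have space\<mu>: "space (\<mu> i) = space (PP i)" for i using sets\<mu>[of i] by (rule sets_eq_imp_space_eq)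
  have ind_meas: "(\<lambda>z. indicator (KK i) z *\<^sub>R mpoly_eval P z) \<in> borel_measurable (PP i)" if i: "i \<in> {1..N}" for i P
  proof (rule borel_measurable_scaleR)
    show "indicator (KK i) \<in> borel_measurable (PP i)"
      unfolding PP_def by (rule borel_measurable_indicator[OF KK_sets[OF i]])
    show "mpoly_eval P \<in> borel_measurable (PP i)"
      unfolding PP_def by (rule cont_meas[OF mpoly_eval_continuous])
  qed
  have qmP: "(\<lambda>z. ennreal (mpoly_eval (q i) z)) \<in> borel_measurable (PP i)" for i
    unfolding PP_def by (rule measurable_compose[OF cont_meas[OF mpoly_eval_continuous] measurable_ennreal])
  have sflip_r: "sflip S I' (restrict x I'') = sflip S I' x" if "I' \<subseteq> I''" for S I' I''
  proof
    fix l show "sflip S I' (restrict x I'') l = sflip S I' x l"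
      using that by (cases "l \<in> I'") (auto simp: sflip_def)
  qed
  have Marg: "marginal I' (q i) (\<mu> i) = distr (density (count_space RR) (\<lambda>_. ennreal (1 / real (card RR)))) (PiM I' (\<lambda>_. lborel)) (\<lambda>S. sflip S I' x)"
    if i: "i \<in> {1..N}" and I': "I' \<subseteq> I i" for i I'
  proof -
    let ?D = "density (count_space RR) (\<lambda>_. ennreal (c i))"
    let ?Q = "\<lambda>S. ennreal (mpoly_eval (q i) (pt i S))"
    have ptm: "pt i \<in> measurable ?D (PP i)" by (rule wd_meas[OF ptsp])
    have ptm2: "pt i \<in> measurable (density ?D ?Q) (PP i)" using ptm by simp
    have rm: "(\<lambda>z. restrict z I') \<in> measurable (PP i) (PiM I' (\<lambda>_. lborel))"
      unfolding PP_def by (rule measurable_restrict_subset[OF I'])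
    have "marginal I' (q i) (\<mu> i) = distr (density (distr ?D (PP i) (pt i)) (\<lambda>z. ennreal (mpoly_eval (q i) z))) (PiM I' (\<lambda>_. lborel)) (\<lambda>z. restrict z I')"
      by (simp add: marginal_def \<mu>_def wdist_def)
    also have "\<dots> = distr (distr (density ?D ?Q) (PP i) (pt i)) (PiM I' (\<lambda>_. lborel)) (\<lambda>z. restrict z I')"
      by (subst density_distr[OF qmP ptm]) (rule refl)
    also have "\<dots> = distr (density ?D ?Q) (PiM I' (\<lambda>_. lborel)) ((\<lambda>z. restrict z I') \<circ> pt i)"
      by (rule distr_distr[OF rm ptm2])
    also have "density ?D ?Q = density (count_space RR) (\<lambda>S. ennreal (c i) * ?Q S)"
      by (rule density_density_eq) simp_all
    also have "\<dots> = density (count_space RR) (\<lambda>_. ennreal (1 / real (card RR)))"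
    proof (rule density_cong)
      show "AE S in count_space RR. ennreal (c i) * ?Q S = ennreal (1 / real (card RR))"
      proof (rule AE_I2)
        fix S assume "S \<in> space (count_space RR)"
        then have S: "S \<in> RR" by simp
        have "ennreal (c i) * ?Q S = ennreal (c i * mpoly_eval (q i) x)"
          using ptq[OF i S] cpos[OF i] qx[OF i] by (simp add: ennreal_mult)
        also have "c i * mpoly_eval (q i) x = 1 / real (card RR)"
          using qx[OF i] by (simp add: c_def)
        finally show "ennreal (c i) * ?Q S = ennreal (1 / real (card RR))" .
      qed
    qed simp_all
    also have "distr (density (count_space RR) (\<lambda>_. ennreal (1 / real (card RR)))) (PiM I' (\<lambda>_. lborel)) ((\<lambda>z. restrict z I') \<circ> pt i)
        = distr (density (count_space RR) (\<lambda>_. ennreal (1 / real (card RR)))) (PiM I' (\<lambda>_. lborel)) (\<lambda>S. sflip S I' x)"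
    proof (rule distr_cong[OF refl refl])
      fix S show "((\<lambda>z. restrict z I') \<circ> pt i) S = sflip S I' x"
        using I' by (simp add: pt_def restrict_sflip sflip_r)
    qed
    finally show ?thesis .
  qed
  have feas: "feasible_cs n m N I J g p q \<mu>"
    unfolding feasible_cs_def
  proof (intro conjI ballI)
    fix i assume i: "i \<in> {1..N}"
    show "sets (\<mu> i) = sets (PiM (I i) (\<lambda>_. lborel))" using sets\<mu>[of i] by (simp add: PP_def)
    show "finite_measure (\<mu> i)"
    proof (rule finite_measureI)
      have "emeasure (\<mu> i) (space (\<mu> i)) = ennreal (c i) * of_nat (card {S\<in>RR. pt i S \<in> space (PP i)})"
        unfolding space\<mu> unfolding \<mu>_def by (rule wd_emeasure[OF RR_fin ptsp sets.top])
      then show "emeasure (\<mu> i) (space (\<mu> i)) \<noteq> \<infinity>" by (simp add: ennreal_mult_eq_top_iff)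
    qed
    have "emeasure (\<mu> i) (space (\<mu> i) - KK i) = ennreal (c i) * of_nat (card {S\<in>RR. pt i S \<in> space (PP i) - KK i})"
      unfolding space\<mu> unfolding \<mu>_def
      by (rule wd_emeasure[OF RR_fin ptsp]) (use KK_sets[OF i] in \<open>auto simp: PP_def\<close>)
    also have "{S\<in>RR. pt i S \<in> space (PP i) - KK i} = {}" using ptK[OF i] by blast
    finally show "emeasure (\<mu> i) (space (\<mu> i) - KK i) = 0" by simp
    show "sym_invariant RR (I i) (\<mu> i)"
      unfolding sym_invariant_def
    proof (intro ballI)
      fix T A assume T: "T \<in> RR" and A: "A \<in> sets (\<mu> i)"
      have A': "A \<in> sets (PP i)" using A sets\<mu>[of i] by simp
      have Asub: "A \<subseteq> PiE (I i) (\<lambda>_. UNIV)"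
        using sets.sets_into_space[OF A'] by (simp add: PP_def space_PiM)
      have img: "sflip T (I i) ` A = sflip T (I i) -` A \<inter> space (PP i)"
      proof (intro equalityI subsetI)
        fix b assume "b \<in> sflip T (I i) ` A"
        then obtain a where a: "a \<in> A" "b = sflip T (I i) a" by blast
        have "sflip T (I i) b = a" using a Asub sflip_invol by blast
        then show "b \<in> sflip T (I i) -` A \<inter> space (PP i)"
          using a by (simp add: PP_def space_PiM sflip_PiE)
      next
        fix b assume b: "b \<in> sflip T (I i) -` A \<inter> space (PP i)"
        then have "b = sflip T (I i) (sflip T (I i) b)"
          using sflip_invol[of b "I i" T] by (simp add: PP_def space_PiM)
        then show "b \<in> sflip T (I i) ` A" using b by blast
      qed
      have imgs: "sflip T (I i) ` A \<in> sets (PP i)"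
        unfolding img using measurable_sets[OF sflip_meas A'[unfolded PP_def]] by (simp add: PP_def)
      define \<phi> where "\<phi> S = (S - T) \<union> (T - S)" for S
      have \<phi>\<phi>: "\<phi> (\<phi> S) = S" for S by (auto simp: \<phi>_def)
      have \<phi>R: "S \<in> RR \<Longrightarrow> \<phi> S \<in> RR" for S unfolding \<phi>_def by (rule RR_symdiff[OF _ T])
      have ptphi: "sflip T (I i) (pt i S) = pt i (\<phi> S)" for S
        by (simp add: pt_def \<phi>_def sflip_sflip)
      have set1: "{S\<in>RR. pt i S \<in> sflip T (I i) ` A} = \<phi> ` {S\<in>RR. pt i S \<in> A}"
      proof (intro equalityI subsetI)
        fix S assume S: "S \<in> {S\<in>RR. pt i S \<in> sflip T (I i) ` A}"
        then have "pt i (\<phi> S) \<in> A" using img ptphi by auto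
        then have "\<phi> S \<in> {S\<in>RR. pt i S \<in> A}" using S \<phi>R by auto
        then show "S \<in> \<phi> ` {S\<in>RR. pt i S \<in> A}" using \<phi>\<phi>[of S] by (metis image_eqI)
      next
        fix S assume "S \<in> \<phi> ` {S\<in>RR. pt i S \<in> A}"
        then obtain S' where S': "S' \<in> RR" "pt i S' \<in> A" "S = \<phi> S'" by blast
        have "pt i S \<in> space (PP i)" using ptsp S' \<phi>R by blast
        moreover have "sflip T (I i) (pt i S) \<in> A" using S' ptphi \<phi>\<phi> by simp
        ultimately show "S \<in> {S\<in>RR. pt i S \<in> sflip T (I i) ` A}"
          using S' \<phi>R img by auto
      qed
      have injphi: "inj_on \<phi> X" for X by (metis \<phi>\<phi> inj_onI)
      show "emeasure (\<mu> i) (sflip T (I i) ` A) = emeasure (\<mu> i) A"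
        unfolding \<mu>_def wd_emeasure[OF RR_fin ptsp imgs] wd_emeasure[OF RR_fin ptsp A'] set1
        by (simp add: card_image[OF injphi])
    qed
    have "(LINT z:KK i|\<mu> i. mpoly_eval (q i) z) = c i * (\<Sum>S\<in>RR. indicator (KK i) (pt i S) *\<^sub>R mpoly_eval (q i) (pt i S))"
      unfolding set_lebesgue_integral_def \<mu>_def
      by (rule wd_integral[OF RR_fin less_imp_le[OF cpos[OF i]] ptsp ind_meas[OF i]])
    also have "\<dots> = c i * (real (card RR) * mpoly_eval (q i) x)"
      using ptK[OF i] ptq[OF i] by simp
    also have "\<dots> = 1"
      using RR_card qx[OF i] by (simp add: c_def)
    finally show "(LINT z:KK i|\<mu> i. mpoly_eval (q i) z) = 1" .
  next
    fix i j assume i: "i \<in> {1..N-1}" and j: "j \<in> Uset N I i"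
    have i': "i \<in> {1..N}" and j': "j \<in> {1..N}" using i j by (auto simp: Uset_def)
    show "marginal (I i \<inter> I j) (q i) (\<mu> i) = marginal (I i \<inter> I j) (q j) (\<mu> j)"
      by (simp add: Marg[OF i'] Marg[OF j'])
  qed
  have obj: "(\<Sum>i=1..N. LINT z:KK i|\<mu> i. mpoly_eval (p i) z) = (\<Sum>i=1..N. mpoly_eval (p i) x / mpoly_eval (q i) x)"
  proof (rule sum.cong[OF refl])
    fix i assume i: "i \<in> {1..N}"
    have "(LINT z:KK i|\<mu> i. mpoly_eval (p i) z) = c i * (\<Sum>S\<in>RR. indicator (KK i) (pt i S) *\<^sub>R mpoly_eval (p i) (pt i S))"
      unfolding set_lebesgue_integral_def \<mu>_def
      by (rule wd_integral[OF RR_fin less_imp_le[OF cpos[OF i]] ptsp ind_meas[OF i]])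
    also have "\<dots> = c i * (real (card RR) * mpoly_eval (p i) x)"
      using ptK[OF i] ptp[OF i] by simp
    also have "\<dots> = mpoly_eval (p i) x / mpoly_eval (q i) x"
      using RR_card qx[OF i] by (simp add: c_def)
    finally show "(LINT z:KK i|\<mu> i. mpoly_eval (p i) z) = mpoly_eval (p i) x / mpoly_eval (q i) x" .
  qed
  show ?thesis
    unfolding rho_cs_def by (rule INF_lower2[of \<mu>]) (use feas obj in auto)
qed

end


theorem theorem4p14:
  fixes n m N :: nat
    and p q :: "nat \<Rightarrow> mpoly" and g :: "nat \<Rightarrow> mpoly"
    and I J :: "nat \<Rightarrow> nat set" and M :: "nat \<Rightarrow> real"
  assumes "n \<ge> 1" and "m \<ge> 1" and "N \<ge> 1"
    and K_compact: "compact (semialg {1..n} g {1..m})"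
    and q_pos_K: "\<forall>i\<in>{1..N}. \<forall>x\<in>semialg {1..n} g {1..m}. mpoly_eval (q i) x > 0"
    and I_sub: "\<forall>i\<in>{1..N}. I i \<subseteq> {1..n}"
    and J_sub: "\<forall>i\<in>{1..N}. J i \<subseteq> {1..m}"
    and I_cover: "(\<Union>i\<in>{1..N}. I i) = {1..n}"
    and J_cover: "(\<Union>i\<in>{1..N}. J i) = {1..m}"
    and cond_i: "\<forall>i\<in>{1..N}. mpoly_vars (p i) \<subseteq> I i \<and> mpoly_vars (q i) \<subseteq> I i"
    and cond_ii: "\<forall>i\<in>{1..N}. \<forall>j\<in>J i. mpoly_vars (g j) \<subseteq> I i"
    and cond_iii: "\<forall>i\<in>{1..N}. M i > 0 \<and> (\<exists>k\<in>J i. g k = ball_poly (M i) (I i))"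
    and cond_iv: "\<forall>i\<in>{2..N}. \<exists>k\<in>{1..i-1}. I i \<inter> (\<Union>j\<in>{1..i-1}. I j) \<subseteq> I k"
    and q_pos_Ki: "\<forall>i\<in>{1..N}. \<forall>z\<in>semialg (I i) g (J i). mpoly_eval (q i) z > 0"
  shows "rho_cs n m N I J g p q =
           (INF x \<in> semialg {1..n} g {1..m}.
              ereal (\<Sum>i=1..N. mpoly_eval (p i) x / mpoly_eval (q i) x))"
proof -
  interpret thm_setup n m N p q g I J M
    by (rule thm_setup.intro[OF I_sub J_sub I_cover J_cover cond_i cond_ii cond_iii cond_iv q_pos_Ki])
  show ?thesis
  proof (rule antisym)
    show "rho_cs n m N I J g p q \<le> (INF x \<in> semialg {1..n} g {1..m}. ereal (\<Sum>i=1..N. mpoly_eval (p i) x / mpoly_eval (q i) x))"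
      by (rule INF_greatest) (rule upper)
    show "(INF x \<in> semialg {1..n} g {1..m}. ereal (\<Sum>i=1..N. mpoly_eval (p i) x / mpoly_eval (q i) x)) \<le> rho_cs n m N I J g p q"
      unfolding rho_cs_def by (rule INF_greatest) (rule lower, simp)
  qed
qed

end
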